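(* Let $X$ be an eventually dendric shift over $\mathcal{A}$ and $\sigma:\mathcal{A}^*\to\mathcal{B}^*$ a return morphism for $w$. Then $Y=\sigma\cdot X$ is eventually dendric. More precisely, suppose $N\in\mathbb{N}$ is such that (i) for every left special $v\in\mathcal{L}(X)$ with $|v|\ge N$ there is a unique letter $a$ with $va$ left special, and moreover $E^L_X(va)=E^L_X(v)$, and (ii) for every right special $v\in\mathcal{L}(X)$ with $|v|\ge N$ there is a unique letter $a$ with $av$ right special, and moreover $E^R_X(av)=E^R_X(v)$. Then the dendricity threshold of $Y$ is at most $\max_{a\in\mathcal{A}}|\sigma(a)|\,(N+1)+|w|-1$.
   Context: A shift space over $\mathcal{A}$ is a nonempty closed shift-invariant $X\subseteq\mathcal{A}^{\mathbb{Z}}$ with language $\mathcal{L}(X)$ containing all letters. For $w\in\mathcal{L}(X)$: $E^L_X(w)=\{a:aw\in\mathcal{L}(X)\}$, $E^R_X(w)=\{b:wb\in\mathcal{L}(X)\}$, $E_X(w)=\{(a,b):awb\in\mathcal{L}(X)\}$; $w$ is left (right) special if $|E^L_X(w)|\ge2$ ($|E^R_X(w)|\ge2$). The extension graph $\mathcal{E}_X(w)$ is the bipartite graph on the disjoint union of copies of $E^L_X(w)$ and $E^R_X(w)$ with edges given by $E_X(w)$; $w$ is dendric if it is a tree. $X$ is eventually dendric if there is $N$ such that all words of $\mathcal{L}(X)$ of length at least $N$ are dendric; the smallest such $N$ is the threshold. Morphisms are non-erasing; $\sigma\cdot X=\{S^k\sigma(x):x\in X,0\le k<|\sigma(x_0)|\}$.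 A return morphism for $w\in\mathcal{B}^+$ is an injective morphism $\sigma$ with $\sigma(a)w$ containing exactly two occurrences of $w$, as a proper prefix and a proper suffix, for every letter $a$. *)

theory Defs
  imports Main
begin

definition shift_map :: "(int \<Rightarrow> 'a) \<Rightarrow> int \<Rightarrow> 'a" where
  "shift_map x = (\<lambda>n. x (n + 1))"

text \<open>Closedness in the product topology of discrete spaces, unfolded via cylinders.\<close>
definition seq_closed :: "(int \<Rightarrow> 'a) set \<Rightarrow> bool" where
  "seq_closed X \<longleftrightarrow>
     (\<forall>x. (\<forall>n::nat. \<exists>y\<in>X. \<forall>i. \<bar>i\<bar> \<le> int n \<longrightarrow> y i = x i) \<longrightarrow> x \<in> X)"

definition lang :: "(int \<Rightarrow> 'a) set \<Rightarrow> 'a list set" where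
  "lang X = {u. \<exists>x\<in>X. \<exists>i::int. u = map (\<lambda>k. x (i + int k)) [0..<length u]}"

definition shift_space :: "(int \<Rightarrow> 'a) set \<Rightarrow> bool" where
  "shift_space X \<longleftrightarrow> X \<noteq> {} \<and> seq_closed X \<and> shift_map ` X = X
      \<and> (\<forall>a. [a] \<in> lang X)"

definition ext_L :: "(int \<Rightarrow> 'a) set \<Rightarrow> 'a list \<Rightarrow> 'a set" where
  "ext_L X u = {a. a # u \<in> lang X}"

definition ext_R :: "(int \<Rightarrow> 'a) set \<Rightarrow> 'a list \<Rightarrow> 'a set" where
  "ext_R X u = {b. u @ [b] \<in> lang X}"

definition ext_B :: "(int \<Rightarrow> 'a) set \<Rightarrow> 'a list \<Rightarrow> ('a \<times> 'a) set" where
  "ext_B X u = {(a, b). a # u @ [b] \<in> lang X}"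

definition left_special :: "(int \<Rightarrow> 'a) set \<Rightarrow> 'a list \<Rightarrow> bool" where
  "left_special X u \<longleftrightarrow> card (ext_L X u) \<ge> 2"

definition right_special :: "(int \<Rightarrow> 'a) set \<Rightarrow> 'a list \<Rightarrow> bool" where
  "right_special X u \<longleftrightarrow> card (ext_R X u) \<ge> 2"

definition graph_connected :: "'v set \<Rightarrow> ('v \<Rightarrow> 'v \<Rightarrow> bool) \<Rightarrow> bool" where
  "graph_connected V E \<longleftrightarrow>
     (\<forall>u\<in>V. \<forall>v\<in>V. (u, v) \<in> ({(p, q). p \<in> V \<and> q \<in> V \<and> E p q})\<^sup>*)"

definition graph_cycle :: "'v set \<Rightarrow> ('v \<Rightarrow> 'v \<Rightarrow> bool) \<Rightarrow> 'v list \<Rightarrow> bool" where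
  "graph_cycle V E cs \<longleftrightarrow> length cs \<ge> 3 \<and> distinct cs \<and> set cs \<subseteq> V \<and>
     (\<forall>i<length cs. E (cs ! i) (cs ! ((i + 1) mod length cs)))"

definition graph_tree :: "'v set \<Rightarrow> ('v \<Rightarrow> 'v \<Rightarrow> bool) \<Rightarrow> bool" where
  "graph_tree V E \<longleftrightarrow> V \<noteq> {} \<and> graph_connected V E \<and> (\<nexists>cs. graph_cycle V E cs)"

definition ext_graph_V :: "(int \<Rightarrow> 'a) set \<Rightarrow> 'a list \<Rightarrow> ('a + 'a) set" where
  "ext_graph_V X u = Inl ` ext_L X u \<union> Inr ` ext_R X u"

definition ext_graph_E :: "(int \<Rightarrow> 'a) set \<Rightarrow> 'a list \<Rightarrow> ('a + 'a) \<Rightarrow> ('a + 'a) \<Rightarrow> bool" where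
  "ext_graph_E X u p q \<longleftrightarrow>
     (\<exists>a b. (a, b) \<in> ext_B X u \<and> ((p = Inl a \<and> q = Inr b) \<or> (p = Inr b \<and> q = Inl a)))"

definition dendric :: "(int \<Rightarrow> 'a) set \<Rightarrow> 'a list \<Rightarrow> bool" where
  "dendric X u \<longleftrightarrow> graph_tree (ext_graph_V X u) (ext_graph_E X u)"

definition eventually_dendric :: "(int \<Rightarrow> 'a) set \<Rightarrow> bool" where
  "eventually_dendric X \<longleftrightarrow> (\<exists>N. \<forall>u\<in>lang X. length u \<ge> N \<longrightarrow> dendric X u)"

definition dendric_threshold :: "(int \<Rightarrow> 'a) set \<Rightarrow> nat" where
  "dendric_threshold X = (LEAST N. \<forall>u\<in>lang X. length u \<ge> N \<longrightarrow> dendric X u)"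

definition morph_word :: "('a \<Rightarrow> 'b list) \<Rightarrow> 'a list \<Rightarrow> 'b list" where
  "morph_word \<sigma> u = concat (map \<sigma> u)"

definition non_erasing :: "('a \<Rightarrow> 'b list) \<Rightarrow> bool" where
  "non_erasing \<sigma> \<longleftrightarrow> (\<forall>a. \<sigma> a \<noteq> [])"

definition occurrences :: "'b list \<Rightarrow> 'b list \<Rightarrow> nat set" where
  "occurrences w v = {i. i + length w \<le> length v \<and> take (length w) (drop i v) = w}"

definition return_morphism :: "('a \<Rightarrow> 'b list) \<Rightarrow> 'b list \<Rightarrow> bool" where
  "return_morphism \<sigma> w \<longleftrightarrow> w \<noteq> [] \<and> non_erasing \<sigma> \<and> inj (morph_word \<sigma>) \<and>
     (\<forall>a. occurrences w (\<sigma> a @ w) = {0, length (\<sigma> a)} \<and> length (\<sigma> a) \<noteq> 0)"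

text \<open>Position in sigma(x) where the block sigma(x_i) starts (sigma(x_0) starts at 0).\<close>
definition block_pos :: "('a \<Rightarrow> 'b list) \<Rightarrow> (int \<Rightarrow> 'a) \<Rightarrow> int \<Rightarrow> int" where
  "block_pos \<sigma> x i =
     (if i \<ge> 0 then (\<Sum>t\<in>{0..<i}. int (length (\<sigma> (x t))))
      else - (\<Sum>t\<in>{i..<0}. int (length (\<sigma> (x t)))))"

text \<open>sigma . X = { S^k sigma(x) : x in X, 0 <= k < |sigma(x_0)| }, where y = S^k sigma(x) is
  characterised by y(n) = sigma(x)(n+k).\<close>
definition morph_shift :: "('a \<Rightarrow> 'b list) \<Rightarrow> (int \<Rightarrow> 'a) set \<Rightarrow> (int \<Rightarrow> 'b) set" where
  "morph_shift \<sigma> X = {y. \<exists>x\<in>X. \<exists>k::int. 0 \<le> k \<and> k < int (length (\<sigma> (x 0))) \<and>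
       (\<forall>i. \<forall>j<length (\<sigma> (x i)). y (block_pos \<sigma> x i + int j - k) = \<sigma> (x i) ! j)}"

end

theory Submission
  imports Defs
begin


lemma lang_D1: "u @ v \<in> lang X \<Longrightarrow> u \<in> lang X"
proof -
  assume "u @ v \<in> lang X"
  then obtain x i where x: "x \<in> X" and e: "u @ v = map (\<lambda>k. x (i + int k)) [0..<length (u@v)]"
    unfolding lang_def by blast
  have "u = map (\<lambda>k. x (i + int k)) [0..<length u]"
  proof (rule nth_equalityI)
    fix k assume "k < length u"
    then show "u ! k = map (\<lambda>k. x (i + int k)) [0..<length u] ! k"
      using arg_cong[OF e, of "\<lambda>l. l ! k"] by (simp add: nth_append)
  qed simp
  with x show ?thesis unfolding lang_def by blast
qed

lemma lang_D2: "u @ v \<in> lang X \<Longrightarrow> v \<in> lang X"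
proof -
  assume "u @ v \<in> lang X"
  then obtain x i where x: "x \<in> X" and e: "u @ v = map (\<lambda>k. x (i + int k)) [0..<length (u@v)]"
    unfolding lang_def by blast
  have "v = map (\<lambda>k. x ((i + int (length u)) + int k)) [0..<length v]"
  proof (rule nth_equalityI)
    fix k assume "k < length v"
    have "(u@v) ! (length u + k) = v ! k" by (simp add: nth_append)
    with \<open>k < length v\<close> show "v ! k = map (\<lambda>k. x ((i + int (length u)) + int k)) [0..<length v] ! k"
      using arg_cong[OF e, of "\<lambda>l. l ! (length u + k)"] by (simp add: add.assoc)
  qed simp
  with x show ?thesis unfolding lang_def by blast
qed

lemma lang_factor: "p @ u @ q \<in> lang X \<Longrightarrow> u \<in> lang X"
  by (metis lang_D1 lang_D2)

lemma ext_B_iff: "(a,b) \<in> ext_B X u \<longleftrightarrow> a # u @ [b] \<in> lang X"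
  by (simp add: ext_B_def)

lemma dstar_dendric:
  assumes ab: "(\<alpha>,\<beta>) \<in> ext_B X u"
    and ds: "\<And>a b. (a,b) \<in> ext_B X u \<Longrightarrow> a = \<alpha> \<or> b = \<beta>"
    and L: "\<And>a. a \<in> ext_L X u \<Longrightarrow> \<exists>b. (a,b) \<in> ext_B X u"
    and R: "\<And>b. b \<in> ext_R X u \<Longrightarrow> \<exists>a. (a,b) \<in> ext_B X u"
  shows "dendric X u"
proof -
  define V where "V = ext_graph_V X u"
  define E where "E = ext_graph_E X u"
  define B where "B = ext_B X u"
  have BL: "a \<in> ext_L X u" if "(a,b) \<in> B" for a b
    using that lang_D1[of "a # u" "[b]" X] by (auto simp: B_def ext_B_def ext_L_def)
  have BR: "b \<in> ext_R X u" if "(a,b) \<in> B" for a b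
    using that lang_D2[of "[a]" "u @ [b]" X] by (auto simp: B_def ext_B_def ext_R_def)
  have Esym: "E p q \<longleftrightarrow> E q p" for p q unfolding E_def ext_graph_E_def by blast
  have EL: "E (Inl a) q \<Longrightarrow> \<exists>b. q = Inr b \<and> (a,b) \<in> B" for a q
    unfolding E_def ext_graph_E_def B_def by auto
  have ER: "E (Inr b) q \<Longrightarrow> \<exists>a. q = Inl a \<and> (a,b) \<in> B" for b q
    unfolding E_def ext_graph_E_def B_def by auto
  have Eab: "(a,b) \<in> B \<Longrightarrow> E (Inl a) (Inr b)" for a b
    unfolding E_def ext_graph_E_def B_def by auto
  have VE: "(a,b) \<in> B \<Longrightarrow> Inl a \<in> V \<and> Inr b \<in> V" for a b
    using BL BR unfolding V_def ext_graph_V_def by auto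
  define rel where "rel = {(p, q). p \<in> V \<and> q \<in> V \<and> E p q}"
  have edge: "(a,b) \<in> B \<Longrightarrow> (Inl a, Inr b) \<in> rel \<and> (Inr b, Inl a) \<in> rel" for a b
    using VE Eab Esym unfolding rel_def by auto
  have abB: "(\<alpha>,\<beta>) \<in> B" using ab B_def by simp
  have toc: "(p, Inl \<alpha>) \<in> rel\<^sup>* \<and> (Inl \<alpha>, p) \<in> rel\<^sup>*" if "p \<in> V" for p
  proof (cases p)
    case (Inl a)
    then have "a \<in> ext_L X u" using that unfolding V_def ext_graph_V_def by auto
    then obtain b where "(a,b) \<in> B" using L B_def by blast
    then have "(a,\<beta>) \<in> B" using ds[of a b] B_def abB by auto
    then show ?thesis using edge[OF abB] edge[of a \<beta>] Inl
      by (meson converse_rtrancl_into_rtrancl r_into_rtrancl rtrancl_into_rtrancl)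
  next
    case (Inr b)
    then have "b \<in> ext_R X u" using that unfolding V_def ext_graph_V_def by auto
    then obtain a where "(a,b) \<in> B" using R B_def by blast
    then have "(\<alpha>,b) \<in> B" using ds[of a b] B_def abB by auto
    then show ?thesis using edge[of \<alpha> b] Inr by blast
  qed
  have conn: "graph_connected V E"
    unfolding graph_connected_def rel_def[symmetric]
    using toc by (meson rtrancl_trans)
  have nocyc: False if cyc: "graph_cycle V E cs" for cs
  proof -
    let ?n = "length cs"
    have n3: "?n \<ge> 3" and dist: "distinct cs" and ed: "\<And>i. i < ?n \<Longrightarrow> E (cs ! i) (cs ! ((i+1) mod ?n))"
      using cyc unfolding graph_cycle_def by auto
    have inS: "cs ! i \<in> {Inl \<alpha>, Inr \<beta>}" if i: "i < ?n" for i
    proof (rule ccontr)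
      assume nin: "cs ! i \<notin> {Inl \<alpha>, Inr \<beta>}"
      define pi where "pi = (if i = 0 then ?n - 1 else i - 1)"
      define ni where "ni = (if i + 1 = ?n then 0 else i + 1)"
      have pil: "pi < ?n" and nil: "ni < ?n" using i n3 unfolding pi_def ni_def by auto
      have "(pi + 1) mod ?n = i" using i n3 unfolding pi_def by auto
      then have e1: "E (cs ! i) (cs ! pi)" using ed[OF pil] Esym by simp
      have "(i + 1) mod ?n = ni" using i unfolding ni_def by auto
      then have e2: "E (cs ! i) (cs ! ni)" using ed[OF i] by simp
      have "pi \<noteq> ni" using i n3 unfolding pi_def ni_def by auto
      then have neq: "cs ! pi \<noteq> cs ! ni" using dist pil nil by (simp add: nth_eq_iff_index_eq)
      show False
      proof (cases "cs ! i")
        case (Inl a)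
        obtain b1 where b1: "cs ! pi = Inr b1" "(a,b1) \<in> B" using EL[of a "cs ! pi"] e1 Inl by auto
        obtain b2 where b2: "cs ! ni = Inr b2" "(a,b2) \<in> B" using EL[of a "cs ! ni"] e2 Inl by auto
        have "a \<noteq> \<alpha>" using nin Inl by auto
        then have "b1 = \<beta>" "b2 = \<beta>" using ds b1 b2 B_def by blast+
        then show False using neq b1 b2 by simp
      next
        case (Inr b)
        obtain a1 where a1: "cs ! pi = Inl a1" "(a1,b) \<in> B" using ER[of b "cs ! pi"] e1 Inr by auto
        obtain a2 where a2: "cs ! ni = Inl a2" "(a2,b) \<in> B" using ER[of b "cs ! ni"] e2 Inr by auto
        have "b \<noteq> \<beta>" using nin Inr by auto
        then have "a1 = \<alpha>" "a2 = \<alpha>" using ds a1 a2 B_def by blast+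
        then show False using neq a1 a2 by simp
      qed
    qed
    then have "set cs \<subseteq> {Inl \<alpha>, Inr \<beta>}" by (metis in_set_conv_nth subsetI)
    then have "card (set cs) \<le> card {Inl \<alpha>, Inr \<beta>}" by (rule card_mono[rotated]) simp
    also have "\<dots> \<le> 2" by (cases "Inl \<alpha> = (Inr \<beta> :: 'a + 'a)") auto
    finally have "card (set cs) \<le> 2" .
    then show False using distinct_card[OF dist] n3 by simp
  qed
  have "V \<noteq> {}" using VE[OF abB] by auto
  then show ?thesis unfolding dendric_def graph_tree_def V_def[symmetric] E_def[symmetric]
    using conn nocyc by blast
qed



lemma card_ge2I: "x \<in> S \<Longrightarrow> y \<in> S \<Longrightarrow> x \<noteq> y \<Longrightarrow> finite S \<Longrightarrow> card S \<ge> 2"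
proof -
  assume a: "x \<in> S" "y \<in> S" "x \<noteq> y" "finite S"
  then have "card {x,y} \<le> card S" by (intro card_mono) auto
  then show ?thesis using a(3) by simp
qed

lemma card_ge2E: "card S \<ge> 2 \<Longrightarrow> \<exists>x y. x \<in> S \<and> y \<in> S \<and> x \<noteq> y"
proof (rule ccontr)
  assume a: "card S \<ge> 2" "\<not> (\<exists>x y. x \<in> S \<and> y \<in> S \<and> x \<noteq> y)"
  then have f: "finite S" by (metis card.infinite not_numeral_le_zero)
  have "card S \<le> Suc 0" using a(2) card_le_Suc0_iff_eq[OF f] by blast
  then show False using a(1) by simp
qed

lemma X_dstar:
  fixes X :: "(int \<Rightarrow> 'a::finite) set"
  assumes ext: "\<exists>a b. a # v @ [b] \<in> lang X"
    and Li: "left_special X v \<Longrightarrow> (\<exists>!a. left_special X (v@[a])) \<and>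
          (\<forall>a. left_special X (v @ [a]) \<longrightarrow> ext_L X (v @ [a]) = ext_L X v)"
    and Ri: "right_special X v \<Longrightarrow> (\<exists>!a. right_special X (a # v)) \<and>
          (\<forall>a. right_special X (a # v) \<longrightarrow> ext_R X (a # v) = ext_R X v)"
  shows "\<exists>\<alpha> \<beta>. (\<alpha>,\<beta>) \<in> ext_B X v \<and> (\<forall>a b. (a,b) \<in> ext_B X v \<longrightarrow> a = \<alpha> \<or> b = \<beta>)"
proof -
  obtain a1 b1 where ab1: "a1 # v @ [b1] \<in> lang X" using ext by blast
  have inL: "a \<in> ext_L X v" if "a # v @ [b] \<in> lang X" for a b
    using lang_D1[of "a # v" "[b]"] that by (simp add: ext_L_def)
  have inR: "b \<in> ext_R X v" if "a # v @ [b] \<in> lang X" for a b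
    using lang_D2[of "[a]" "v @ [b]"] that by (simp add: ext_R_def)
  show ?thesis
  proof (cases "left_special X v")
    case LS: True
    show ?thesis
    proof (cases "right_special X v")
      case RS: True
      obtain b0 where b0: "left_special X (v@[b0])" "ext_L X (v@[b0]) = ext_L X v"
        using Li[OF LS] by blast
      obtain a0 where a0: "right_special X (a0 # v)" "ext_R X (a0 # v) = ext_R X v"
        and a0u: "\<And>a. right_special X (a # v) \<Longrightarrow> a = a0"
        using Ri[OF RS] by blast
      have "card (ext_R X (a0 # v)) \<ge> 2" using a0 by (simp add: right_special_def)
      then obtain b where "b \<in> ext_R X (a0 # v)" using card_ge2E by blast
      then have "a0 \<in> ext_L X v" using inL by (simp add: ext_R_def)
      then have "a0 # v @ [b0] \<in> lang X" using b0(2) unfolding ext_L_def by blast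
      moreover have "a = a0 \<or> b = b0" if "(a,b) \<in> ext_B X v" for a b
      proof (rule ccontr)
        assume "\<not> (a = a0 \<or> b = b0)"
        have ab: "a # v @ [b] \<in> lang X" using that by (simp add: ext_B_def)
        then have "a \<in> ext_L X (v @ [b0])" using inL b0 by simp
        then have "b0 \<in> ext_R X (a # v)" "b \<in> ext_R X (a # v)" using ab by (simp_all add: ext_L_def ext_R_def)
        then have "right_special X (a # v)" unfolding right_special_def
          using card_ge2I \<open>\<not> (a = a0 \<or> b = b0)\<close> by (metis finite)
        then show False using a0u \<open>\<not> (a = a0 \<or> b = b0)\<close> by blast
      qed
      ultimately show ?thesis by (auto simp: ext_B_def)
    next
      case RS: False
      have "b = b1" if "(a,b) \<in> ext_B X v" for a b
      proof (rule ccontr)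
        assume "b \<noteq> b1"
        have "b \<in> ext_R X v" "b1 \<in> ext_R X v" using that inR ab1 by (auto simp: ext_B_def)
        then show False using RS \<open>b \<noteq> b1\<close> card_ge2I unfolding right_special_def by (metis finite)
      qed
      then show ?thesis using ab1 by (auto simp: ext_B_def)
    qed
  next
    case LS: False
    have "a = a1" if "(a,b) \<in> ext_B X v" for a b
    proof (rule ccontr)
      assume "a \<noteq> a1"
      have "a \<in> ext_L X v" "a1 \<in> ext_L X v" using that inL ab1 by (auto simp: ext_B_def)
      then show False using LS \<open>a \<noteq> a1\<close> card_ge2I unfolding left_special_def by (metis finite)
    qed
    then show ?thesis using ab1 by (auto simp: ext_B_def)
  qed
qed

lemma stab:
  fixes Lg :: "'a::finite list set"
  assumes pre: "\<And>a u b. a # u @ [b] \<in> Lg \<Longrightarrow> a # u \<in> Lg"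
    and no4: "\<And>u a1 a2 b1 b2. length u \<ge> T0 \<Longrightarrow> a1 \<noteq> a2 \<Longrightarrow> b1 \<noteq> b2 \<Longrightarrow>
       a1 # u @ [b1] \<in> Lg \<Longrightarrow> a2 # u @ [b1] \<in> Lg \<Longrightarrow> a1 # u @ [b2] \<in> Lg \<Longrightarrow> a2 # u @ [b2] \<in> Lg \<Longrightarrow> False"
  shows "\<exists>N. \<forall>v. card {a. a # v \<in> Lg} \<ge> 2 \<and> length v \<ge> N \<longrightarrow>
     (\<exists>!b. card {a. a # v @ [b] \<in> Lg} \<ge> 2) \<and>
     (\<forall>b. card {a. a # v @ [b] \<in> Lg} \<ge> 2 \<longrightarrow> {a. a # v @ [b] \<in> Lg} = {a. a # v \<in> Lg})"
proof -
  define E where "E v = {a. a # v \<in> Lg}" for v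
  define LS where "LS v \<longleftrightarrow> card (E v) \<ge> 2" for v
  define K :: nat where "K = card (UNIV :: 'a set) + 1"
  define S where "S n = {v. length v = n \<and> LS v}" for n
  define \<Phi> where "\<Phi> n = (\<Sum>v\<in>S n. K ^ card (E v))" for n
  define ch where "ch v = {b. LS (v @ [b])}" for v
  define g where "g v = (\<Sum>b\<in>ch v. K ^ card (E (v @ [b])))" for v
  define good where "good v \<longleftrightarrow> (\<exists>!b. LS (v @ [b])) \<and> (\<forall>b. LS (v @ [b]) \<longrightarrow> E (v @ [b]) = E v)" for v
  have K1: "K > 1" unfolding K_def by (simp add: finite_UNIV_card_ge_0)
  have Esub: "E (v @ [b]) \<subseteq> E v" for v b using pre unfolding E_def by auto
  have LSmono: "LS (v @ [b]) \<Longrightarrow> LS v" for v b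
    unfolding LS_def using card_mono[OF finite Esub] by (meson le_trans)
  have finS: "finite (S n)" for n
  proof -
    have "S n \<subseteq> {xs. set xs \<subseteq> UNIV \<and> length xs = n}" unfolding S_def by auto
    then show ?thesis using finite_lists_length_eq[of "UNIV :: 'a set" n] finite_subset by auto
  qed
  have S_Suc: "S (Suc n) = (\<lambda>(v,b). v @ [b]) ` (SIGMA v:S n. ch v)" for n
  proof
    show "S (Suc n) \<subseteq> (\<lambda>(v,b). v @ [b]) ` (SIGMA v:S n. ch v)"
    proof
      fix v' assume v': "v' \<in> S (Suc n)"
      then have "v' \<noteq> []" unfolding S_def by auto
      then have eq: "v' = butlast v' @ [last v']" by simp
      have "LS v'" "length v' = Suc n" using v' unfolding S_def by auto
      then have "butlast v' \<in> S n" "last v' \<in> ch (butlast v')"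
        using LSmono[of "butlast v'" "last v'"] eq unfolding S_def ch_def by auto
      then show "v' \<in> (\<lambda>(v,b). v @ [b]) ` (SIGMA v:S n. ch v)" using eq by force
    qed
  next
    show "(\<lambda>(v,b). v @ [b]) ` (SIGMA v:S n. ch v) \<subseteq> S (Suc n)"
      unfolding S_def ch_def by auto
  qed
  have injS: "inj_on (\<lambda>(v,b). v @ [b]) (SIGMA v:S n. ch v)" for n
    by (rule inj_onI) auto
  have PhiSuc: "\<Phi> (Suc n) = (\<Sum>v\<in>S n. g v)" for n
  proof -
    have "\<Phi> (Suc n) = (\<Sum>x\<in>(SIGMA v:S n. ch v). K ^ card (E ((\<lambda>(v,b). v @ [b]) x)))"
      unfolding \<Phi>_def S_Suc by (subst sum.reindex[OF injS]) (simp add: comp_def)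
    also have "\<dots> = (\<Sum>v\<in>S n. g v)"
      unfolding g_def using sum.Sigma[of "S n" ch "\<lambda>v b. K ^ card (E (v @ [b]))"] finite finS
      by (simp add: split_def)
    finally show ?thesis .
  qed
  have perv: "g v \<le> K ^ card (E v) \<and> (g v = K ^ card (E v) \<longrightarrow> good v)"
    if v: "LS v" "length v \<ge> T0" for v
  proof -
    define p where "p = card (E v)"
    have p2: "p \<ge> 2" using v unfolding LS_def p_def by simp
    have cle: "card (E (v @ [b])) \<le> p" for b unfolding p_def by (rule card_mono[OF finite Esub])
    show ?thesis
    proof (cases "\<exists>b1 b2. b1 \<in> ch v \<and> b2 \<in> ch v \<and> b1 \<noteq> b2")
      case True
      then obtain b1 b2 where b12: "b1 \<in> ch v" "b2 \<in> ch v" "b1 \<noteq> b2" by blast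
      have lt: "card (E (v @ [b])) \<le> p - 1" if b: "b \<in> ch v" for b
      proof (rule ccontr)
        assume "\<not> ?thesis"
        then have "card (E (v @ [b])) = card (E v)" using cle[of b] p2 unfolding p_def by linarith
        then have eq: "E (v @ [b]) = E v" using card_subset_eq[OF finite Esub] by blast
        obtain b' where b': "b' \<in> ch v" "b' \<noteq> b" using b12 by blast
        then have "card (E (v @ [b'])) \<ge> 2" unfolding ch_def LS_def by simp
        then obtain a1 a2 where a12: "a1 \<in> E (v @ [b'])" "a2 \<in> E (v @ [b'])" "a1 \<noteq> a2"
          using card_ge2E by blast
        then have "a1 \<in> E (v @ [b])" "a2 \<in> E (v @ [b])" using Esub eq by blast+
        then show False using no4[OF v(2) a12(3) b'(2)] a12 unfolding E_def by simp
      qed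
      have "g v \<le> (\<Sum>b\<in>ch v. K ^ (p - 1))"
        unfolding g_def by (rule sum_mono) (use lt K1 in \<open>simp add: power_increasing\<close>)
      also have "\<dots> = card (ch v) * K ^ (p - 1)" by simp
      also have "\<dots> \<le> card (UNIV :: 'a set) * K ^ (p - 1)"
        by (rule mult_right_mono) (simp_all add: card_mono)
      also have "\<dots> < K * K ^ (p - 1)" using K1 unfolding K_def by simp
      also have "\<dots> = K ^ Suc (p - 1)" by simp
      also have "Suc (p - 1) = p" using p2 by simp
      finally show ?thesis unfolding p_def by simp
    next
      case False
      show ?thesis
      proof (cases "ch v = {}")
        case True
        then show ?thesis unfolding g_def using K1 by simp
      next
        case False2: False
        then obtain b0 where b0: "b0 \<in> ch v" by blast
        then have chv: "ch v = {b0}" using False by blast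
        have gv: "g v = K ^ card (E (v @ [b0]))" unfolding g_def chv by simp
        have le: "g v \<le> K ^ p" unfolding gv using cle[of b0] K1 by (simp add: power_increasing)
        moreover have "good v" if "g v = K ^ card (E v)"
        proof -
          have "card (E (v @ [b0])) = card (E v)" using that gv K1 by (simp add: power_inject_exp)
          then have "E (v @ [b0]) = E v" using card_subset_eq[OF finite Esub] by blast
          moreover have "LS (v @ [b]) \<longleftrightarrow> b = b0" for b using chv unfolding ch_def by blast
          ultimately show ?thesis unfolding good_def by auto
        qed
        ultimately show ?thesis unfolding p_def by blast
      qed
    qed
  qed
  have stepL: "\<Phi> (Suc n) \<le> \<Phi> n \<and> (\<Phi> (Suc n) = \<Phi> n \<longrightarrow> (\<forall>v\<in>S n. good v))" if n: "n \<ge> T0" for n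
  proof -
    have vs: "v \<in> S n \<Longrightarrow> LS v \<and> length v \<ge> T0" for v using n unfolding S_def by auto
    have "(\<Sum>v\<in>S n. g v) \<le> (\<Sum>v\<in>S n. K ^ card (E v))"
      by (rule sum_mono) (use perv vs in blast)
    then have le: "\<Phi> (Suc n) \<le> \<Phi> n" using PhiSuc[of n] \<Phi>_def[of n] by simp
    moreover have "\<forall>v\<in>S n. good v" if eq: "\<Phi> (Suc n) = \<Phi> n"
    proof (rule ccontr)
      assume "\<not> ?thesis"
      then obtain v0 where v0: "v0 \<in> S n" "\<not> good v0" by blast
      have "g v0 < K ^ card (E v0)" using perv[of v0] vs[OF v0(1)] v0(2) by fastforce
      then have "(\<Sum>v\<in>S n. g v) < (\<Sum>v\<in>S n. K ^ card (E v))"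
        using sum_strict_mono_ex1[of "S n" g "\<lambda>v. K ^ card (E v)"] finS perv vs v0(1) by blast
      then show False using eq PhiSuc[of n] \<Phi>_def[of n] by simp
    qed
    ultimately show ?thesis by blast
  qed
  obtain n0 where n0: "n0 \<ge> T0" "\<And>n. n \<ge> T0 \<Longrightarrow> \<Phi> n0 \<le> \<Phi> n"
    using ex_has_least_nat[where P="\<lambda>n. n \<ge> T0" and k=T0 and m=\<Phi>] by auto
  have dec: "\<Phi> n \<le> \<Phi> n0" if "n \<ge> n0" for n
    using that
  proof (induction n rule: dec_induct)
    case base then show ?case by simp
  next
    case (step m) then show ?case using \<open>n0 \<ge> T0\<close> stepL[of m] by linarith
  qed
  have allgood: "good v" if "LS v" "length v \<ge> n0" for v
  proof -
    let ?n = "length v"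
    have "\<Phi> (Suc ?n) = \<Phi> ?n" using dec[of ?n] dec[of "Suc ?n"] n0(2)[of "Suc ?n"] n0(1) that(2)
        stepL[of ?n] by linarith
    then show ?thesis using stepL[of ?n] that n0(1) unfolding S_def by auto
  qed
  show ?thesis
    by (rule exI[of _ n0]) (use allgood in \<open>auto simp: good_def LS_def E_def\<close>)
qed



lemma mw_Nil[simp]: "morph_word \<sigma> [] = []" by (simp add: morph_word_def)
lemma mw_Cons[simp]: "morph_word \<sigma> (a # v) = \<sigma> a @ morph_word \<sigma> v" by (simp add: morph_word_def)
lemma mw_append[simp]: "morph_word \<sigma> (u @ v) = morph_word \<sigma> u @ morph_word \<sigma> v" by (simp add: morph_word_def)

lemma rm_occ: "return_morphism \<sigma> w \<Longrightarrow> occurrences w (\<sigma> a @ w) = {0, length (\<sigma> a)}"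
  by (simp add: return_morphism_def)

lemma rm_ne: "return_morphism \<sigma> w \<Longrightarrow> \<sigma> a \<noteq> []"
  by (simp add: return_morphism_def non_erasing_def)

lemma rm_start: "return_morphism \<sigma> w \<Longrightarrow> \<exists>t. \<sigma> a @ w = w @ t"
proof -
  assume rm: "return_morphism \<sigma> w"
  have "0 \<in> occurrences w (\<sigma> a @ w)" using rm_occ[OF rm] by simp
  then have "take (length w) (\<sigma> a @ w) = w" by (simp add: occurrences_def)
  then show ?thesis by (metis append_take_drop_id)
qed

lemma mw_start: "return_morphism \<sigma> w \<Longrightarrow> \<exists>t. morph_word \<sigma> V @ w = w @ t"
proof (induction V)
  case Nil then show ?case by simp
next
  case (Cons a V)
  obtain t where t: "morph_word \<sigma> V @ w = w @ t" using Cons by blast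
  obtain t' where t': "\<sigma> a @ w = w @ t'" using rm_start[OF Cons.prems] by blast
  have "morph_word \<sigma> (a # V) @ w = w @ t' @ t" using t t' by (metis append.assoc mw_Cons)
  then show ?case by blast
qed

lemma mw_len: "return_morphism \<sigma> w \<Longrightarrow> length (morph_word \<sigma> V) \<ge> length V"
proof (induction V)
  case Nil then show ?case by simp
next
  case (Cons a V)
  have "length (\<sigma> a) > 0" using rm_ne[OF Cons.prems, of a] by simp
  then have "Suc (length V) \<le> length (\<sigma> a) + length (morph_word \<sigma> V)" using Cons.IH[OF Cons.prems] by linarith
  then show ?case by simp
qed

lemma mw_len_le: "(\<And>a. length (\<sigma> a) \<le> M) \<Longrightarrow> length (morph_word \<sigma> V) \<le> M * length V"
  by (induction V) (simp_all add: add_mono)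

definition bpf :: "('a \<Rightarrow> 'b list) \<Rightarrow> 'a list \<Rightarrow> nat \<Rightarrow> nat" where
  "bpf \<sigma> V j = length (morph_word \<sigma> (take j V))"

lemma bpf_0[simp]: "bpf \<sigma> V 0 = 0" by (simp add: bpf_def)
lemma bpf_Cons_Suc[simp]: "bpf \<sigma> (a # V) (Suc j) = length (\<sigma> a) + bpf \<sigma> V j" by (simp add: bpf_def)
lemma bpf_len[simp]: "bpf \<sigma> V (length V) = length (morph_word \<sigma> V)" by (simp add: bpf_def)

lemma bpf_Suc: "j < length V \<Longrightarrow> bpf \<sigma> V (Suc j) = bpf \<sigma> V j + length (\<sigma> (V ! j))"
  by (simp add: bpf_def take_Suc_conv_app_nth)

lemma take_split: "j \<le> j' \<Longrightarrow> take j' V = take j V @ drop j (take j' V)"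
  by (metis append_take_drop_id min.absorb1 take_take)

lemma bpf_mono: "j \<le> j' \<Longrightarrow> bpf \<sigma> V j \<le> bpf \<sigma> V j'"
  unfolding bpf_def by (subst take_split[of j j' V]) simp_all

lemma bpf_strict: "return_morphism \<sigma> w \<Longrightarrow> j < j' \<Longrightarrow> j' \<le> length V \<Longrightarrow> bpf \<sigma> V j < bpf \<sigma> V j'"
proof -
  assume rm: "return_morphism \<sigma> w" and jj: "j < j'" "j' \<le> length V"
  have "bpf \<sigma> V j < bpf \<sigma> V (Suc j)" using bpf_Suc[of j V \<sigma>] jj rm_ne[OF rm, of "V ! j"] by simp
  also have "\<dots> \<le> bpf \<sigma> V j'" using jj by (intro bpf_mono) simp
  finally show ?thesis .
qed

lemma bpf_le_len: "bpf \<sigma> V j \<le> length (morph_word \<sigma> V)"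
proof -
  have "morph_word \<sigma> V = morph_word \<sigma> (take j V) @ morph_word \<sigma> (drop j V)"
    by (metis append_take_drop_id mw_append)
  then show ?thesis unfolding bpf_def by (metis le_add1 length_append)
qed

lemma seg: "j \<le> j' \<Longrightarrow> drop (bpf \<sigma> V j) (take (bpf \<sigma> V j') (morph_word \<sigma> V)) = morph_word \<sigma> (drop j (take j' V))"
proof -
  assume jj: "j \<le> j'"
  have "morph_word \<sigma> V = morph_word \<sigma> (take j' V) @ morph_word \<sigma> (drop j' V)"
    by (metis append_take_drop_id mw_append)
  then have "take (bpf \<sigma> V j') (morph_word \<sigma> V) = morph_word \<sigma> (take j' V)"
    by (simp add: bpf_def)
  also have "\<dots> = morph_word \<sigma> (take j V) @ morph_word \<sigma> (drop j (take j' V))"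
    by (subst take_split[OF jj]) simp
  finally show ?thesis by (simp add: bpf_def)
qed

lemma seg_W: "j \<le> j' \<Longrightarrow> drop (bpf \<sigma> V j) (take (bpf \<sigma> V j') (morph_word \<sigma> V @ w)) = morph_word \<sigma> (drop j (take j' V))"
  using seg[of j j' \<sigma> V] bpf_le_len[of \<sigma> V j'] by simp

lemma blk: "return_morphism \<sigma> w \<Longrightarrow> j < length V \<Longrightarrow>
   \<exists>t. drop (bpf \<sigma> V j) (morph_word \<sigma> V @ w) = \<sigma> (V ! j) @ w @ t"
proof -
  assume rm: "return_morphism \<sigma> w" and j: "j < length V"
  obtain t where t: "morph_word \<sigma> (drop (Suc j) V) @ w = w @ t" using mw_start[OF rm] by blast
  have "V = take j V @ V ! j # drop (Suc j) V" using j by (simp add: id_take_nth_drop)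
  then have "morph_word \<sigma> V @ w = morph_word \<sigma> (take j V) @ \<sigma> (V ! j) @ morph_word \<sigma> (drop (Suc j) V) @ w"
    by (metis append.assoc mw_Cons mw_append)
  then have "drop (bpf \<sigma> V j) (morph_word \<sigma> V @ w) = \<sigma> (V ! j) @ w @ t"
    using t by (simp add: bpf_def)
  then show ?thesis by blast
qed

lemma occ_sub: "W = P @ u @ Q \<Longrightarrow>
   t \<in> occurrences w u \<longleftrightarrow> t + length w \<le> length u \<and> length P + t \<in> occurrences w W"
  by (auto simp: occurrences_def)

lemma occ_shift: "k \<in> occurrences w Y \<longleftrightarrow> length Z + k \<in> occurrences w (Z @ Y)"
  unfolding occurrences_def by simp

lemma sync: "return_morphism \<sigma> w \<Longrightarrow>
   i \<in> occurrences w (morph_word \<sigma> V @ w) \<longleftrightarrow> (\<exists>j\<le>length V. i = bpf \<sigma> V j)"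
proof (induction V arbitrary: i)
  case Nil
  then show ?case by (auto simp: occurrences_def)
next
  case (Cons a V)
  have rm: "return_morphism \<sigma> w" by fact
  obtain t where t: "morph_word \<sigma> V @ w = w @ t" using mw_start[OF rm] by blast
  obtain t' where t': "\<sigma> a @ w = w @ t'" using rm_start[OF rm] by blast
  have W: "morph_word \<sigma> (a # V) @ w = \<sigma> a @ w @ t" using t by simp
  show ?case
  proof
    assume i: "i \<in> occurrences w (morph_word \<sigma> (a # V) @ w)"
    show "\<exists>j\<le>length (a # V). i = bpf \<sigma> (a # V) j"
    proof (cases "i < length (\<sigma> a)")
      case True
      have "i \<in> occurrences w (\<sigma> a @ w @ t)" using i unfolding W .
      then have "take (length w) (drop i (\<sigma> a @ w @ t)) = w" by (simp add: occurrences_def)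
      moreover have "drop i (\<sigma> a @ w @ t) = drop i (\<sigma> a @ w) @ t" using True by simp
      moreover have "length (drop i (\<sigma> a @ w)) \<ge> length w" using True by simp
      ultimately have "take (length w) (drop i (\<sigma> a @ w)) = w" by simp
      then have "i \<in> occurrences w (\<sigma> a @ w)" using True by (simp add: occurrences_def)
      then have "i = 0" using rm_occ[OF rm, of a] True by auto
      then show ?thesis by (intro exI[of _ 0]) simp
    next
      case False
      have h1: "i + length w \<le> length (morph_word \<sigma> (a # V) @ w)"
        and h2: "take (length w) (drop i (morph_word \<sigma> (a # V) @ w)) = w"
        using i unfolding occurrences_def by auto
      have d: "drop i (morph_word \<sigma> (a # V) @ w) = drop (i - length (\<sigma> a)) (morph_word \<sigma> V @ w)"
        using False by simp
      have "i - length (\<sigma> a) \<in> occurrences w (morph_word \<sigma> V @ w)"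
        unfolding occurrences_def using h1 h2 d False by auto
      then obtain j where "j \<le> length V" "i - length (\<sigma> a) = bpf \<sigma> V j" using Cons.IH[OF rm] by blast
      then show ?thesis using False by (intro exI[of _ "Suc j"]) simp
    qed
  next
    assume "\<exists>j\<le>length (a # V). i = bpf \<sigma> (a # V) j"
    then obtain j where j: "j \<le> Suc (length V)" "i = bpf \<sigma> (a # V) j" by auto
    show "i \<in> occurrences w (morph_word \<sigma> (a # V) @ w)"
    proof (cases j)
      case 0
      have "morph_word \<sigma> (a # V) @ w = w @ t' @ t" using W t' by (metis append.assoc)
      then have "take (length w) (morph_word \<sigma> (a # V) @ w) = w" "length w \<le> length (morph_word \<sigma> (a # V) @ w)"
        by simp_all
      then show ?thesis using j 0 unfolding occurrences_def by simp
    next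
      case (Suc j')
      then have "bpf \<sigma> V j' \<in> occurrences w (morph_word \<sigma> V @ w)" using Cons.IH[OF rm] j by auto
      then have "length (\<sigma> a) + bpf \<sigma> V j' \<in> occurrences w (\<sigma> a @ morph_word \<sigma> V @ w)"
        using occ_shift by blast
      then show ?thesis using j Suc by simp
    qed
  qed
qed

lemma cov1:
  assumes "\<And>a. length (\<sigma> a) \<le> M" "M \<ge> 1"
  shows "p \<le> length (morph_word \<sigma> V) \<Longrightarrow> \<exists>j\<le>length V. p \<le> bpf \<sigma> V j \<and> bpf \<sigma> V j < p + M"
proof (induction V arbitrary: p)
  case Nil then show ?case using assms by auto
next
  case (Cons a V)
  show ?case
  proof (cases "p = 0")
    case True then show ?thesis using assms by (intro exI[of _ 0]) auto
  next
    case False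
    show ?thesis
    proof (cases "p \<le> length (\<sigma> a)")
      case True
      then show ?thesis using False assms(1)[of a] by (intro exI[of _ 1]) (auto simp: bpf_def)
    next
      case False2: False
      have "p - length (\<sigma> a) \<le> length (morph_word \<sigma> V)" using Cons.prems by simp
      from Cons.IH[OF this] obtain j where "j \<le> length V" "p - length (\<sigma> a) \<le> bpf \<sigma> V j" "bpf \<sigma> V j < p - length (\<sigma> a) + M"
        by blast
      then show ?thesis using False2 by (intro exI[of _ "Suc j"]) auto
    qed
  qed
qed

lemma cov2:
  assumes "\<And>a. length (\<sigma> a) \<le> M" "M \<ge> 1"
  shows "p \<le> length (morph_word \<sigma> V) \<Longrightarrow> \<exists>j\<le>length V. bpf \<sigma> V j \<le> p \<and> p < bpf \<sigma> V j + M"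
proof (induction V arbitrary: p)
  case Nil then show ?case using assms by auto
next
  case (Cons a V)
  show ?case
  proof (cases "p < length (\<sigma> a)")
    case True then show ?thesis using assms(1)[of a] by (intro exI[of _ 0]) auto
  next
    case False
    have "p - length (\<sigma> a) \<le> length (morph_word \<sigma> V)" using Cons.prems by simp
    from Cons.IH[OF this] obtain j where "j \<le> length V" "bpf \<sigma> V j \<le> p - length (\<sigma> a)" "p - length (\<sigma> a) < bpf \<sigma> V j + M"
      by blast
    then show ?thesis using False by (intro exI[of _ "Suc j"]) auto
  qed
qed



definition Fac :: "(int \<Rightarrow> 'a) set \<Rightarrow> ('a \<Rightarrow> 'b list) \<Rightarrow> 'b list \<Rightarrow> 'b list set" where
  "Fac X \<sigma> w = {u. \<exists>V\<in>lang X. \<exists>P Q. morph_word \<sigma> V @ w = P @ u @ Q}"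

lemma occ_fin: "finite (occurrences w u)"
  by (rule finite_subset[of _ "{..length u}"]) (auto simp: occurrences_def)

lemma emb: "return_morphism \<sigma> w \<Longrightarrow> morph_word \<sigma> V @ w = P @ u @ Q \<Longrightarrow> t \<in> occurrences w u \<Longrightarrow>
   \<exists>j\<le>length V. bpf \<sigma> V j = length P + t"
  using occ_sub[of "morph_word \<sigma> V @ w" P u Q t w] sync[of \<sigma> w "length P + t" V] by metis

lemma emb2: "return_morphism \<sigma> w \<Longrightarrow> morph_word \<sigma> V @ w = P @ u @ Q \<Longrightarrow> j \<le> length V \<Longrightarrow>
   length P \<le> bpf \<sigma> V j \<Longrightarrow> bpf \<sigma> V j + length w \<le> length P + length u \<Longrightarrow>
   bpf \<sigma> V j - length P \<in> occurrences w u"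
  using occ_sub[of "morph_word \<sigma> V @ w" P u Q "bpf \<sigma> V j - length P" w] sync[of \<sigma> w "bpf \<sigma> V j" V]
  by auto

lemma app_pre: "X @ d # Q = Z @ t \<Longrightarrow> length X < length Z \<Longrightarrow> \<exists>Q'. Z = X @ d # Q'"
proof -
  assume e: "X @ d # Q = Z @ t" and l: "length X < length Z"
  obtain us where "X = Z @ us \<and> us @ d # Q = t \<or> X @ us = Z \<and> d # Q = us @ t"
    using e append_eq_append_conv2[of X "d # Q" Z t] by blast
  then show ?thesis
  proof
    assume "X = Z @ us \<and> us @ d # Q = t" then show ?thesis using l by simp
  next
    assume h: "X @ us = Z \<and> d # Q = us @ t"
    then have "us \<noteq> []" using l by auto
    then obtain us' where "us = d # us'" using h by (cases us) auto
    then show ?thesis using h by blast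
  qed
qed

lemma drop_take_one: "k < length V \<Longrightarrow> drop k (take (Suc k) V) = [V ! k]"
  by (simp add: take_Suc_conv_app_nth)

lemma drop_take_ext: "1 \<le> j \<Longrightarrow> j \<le> j' \<Longrightarrow> j' < length V \<Longrightarrow>
   drop (j - 1) (take (Suc j') V) = V ! (j - 1) # drop j (take j' V) @ [V ! j']"
proof -
  assume a: "1 \<le> j" "j \<le> j'" "j' < length V"
  have "take (Suc j') V = take j' V @ [V ! j']" using a by (simp add: take_Suc_conv_app_nth)
  moreover have "drop (j - 1) (take j' V) = take j' V ! (j - 1) # drop (Suc (j - 1)) (take j' V)"
    using a by (intro Cons_nth_drop_Suc[symmetric]) simp
  ultimately show ?thesis using a by simp
qed

lemma lang_seg: "V \<in> lang X \<Longrightarrow> j \<le> j' \<Longrightarrow> drop j (take j' V) \<in> lang X"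
proof -
  assume V: "V \<in> lang X" and jj: "j \<le> j'"
  have "V = take j V @ drop j (take j' V) @ drop j' V"
    using take_split[OF jj, of V] by (metis append.assoc append_take_drop_id)
  then show ?thesis using V lang_factor by metis
qed

lemma ext_dir:
  assumes rm: "return_morphism \<sigma> w" and W: "morph_word \<sigma> V @ w = P @ c # u @ d # Q"
    and ne: "occurrences w u \<noteq> {}"
  shows "\<exists>j j'. 1 \<le> j \<and> j \<le> j' \<and> j' < length V \<and>
     (\<exists>P'. \<sigma> (V ! (j - 1)) = P' @ c # take (Min (occurrences w u)) u) \<and>
     (\<exists>Q'. \<sigma> (V ! j') @ w = drop (Max (occurrences w u)) u @ d # Q') \<and>
     morph_word \<sigma> (drop j (take j' V)) = drop (Min (occurrences w u)) (take (Max (occurrences w u)) u)"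
proof -
  define Oc where "Oc = occurrences w u"
  define i0 where "i0 = Min Oc"
  define i1 where "i1 = Max Oc"
  have fin: "finite Oc" unfolding Oc_def by (rule occ_fin)
  have i0O: "i0 \<in> Oc" and i1O: "i1 \<in> Oc" using ne fin unfolding i0_def i1_def Oc_def by auto
  have minO: "\<And>t. t \<in> Oc \<Longrightarrow> i0 \<le> t" and maxO: "\<And>t. t \<in> Oc \<Longrightarrow> t \<le> i1"
    using fin unfolding i0_def i1_def by auto
  have i01: "i0 \<le> i1" using minO i1O .
  have i1w: "i1 + length w \<le> length u" using i1O unfolding Oc_def occurrences_def by simp
  have W1: "morph_word \<sigma> V @ w = (P @ [c]) @ u @ (d # Q)" using W by simp
  have lenW: "length (morph_word \<sigma> V) + length w = length P + length u + 2 + length Q"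
    using arg_cong[OF W, of length] by simp
  obtain j where j: "j \<le> length V" "bpf \<sigma> V j = length P + 1 + i0"
    using emb[OF rm W1, of i0] i0O unfolding Oc_def by auto
  obtain j' where j': "j' \<le> length V" "bpf \<sigma> V j' = length P + 1 + i1"
    using emb[OF rm W1, of i1] i1O unfolding Oc_def by auto
  have jj: "j \<le> j'"
  proof (rule ccontr)
    assume "\<not> j \<le> j'"
    then have "bpf \<sigma> V j' < bpf \<sigma> V j" using bpf_strict[OF rm, of j' j V] j by simp
    then show False using j j' i01 by simp
  qed
  have j1: "1 \<le> j" using j by (cases j) auto
  have hb: "bpf \<sigma> V (j - 1) \<le> length P"
  proof (rule ccontr)
    assume nh0: "\<not> ?thesis"
    have lt: "bpf \<sigma> V (j - 1) < bpf \<sigma> V j" using bpf_strict[OF rm, of "j - 1" j V] j j1 by simp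
    have "bpf \<sigma> V (j - 1) - length (P @ [c]) \<in> Oc"
      unfolding Oc_def using nh0 lt j i01 i1w
      by (intro emb2[OF rm W1]) auto
    then have "i0 \<le> bpf \<sigma> V (j - 1) - length (P @ [c])" using minO by blast
    then show False using lt j nh0 by simp
  qed
  have tk: "take (bpf \<sigma> V j) (morph_word \<sigma> V @ w) = P @ c # take i0 u"
    using j(2) i01 i1w unfolding W by simp
  have "\<sigma> (V ! (j - 1)) = drop (bpf \<sigma> V (j - 1)) (take (bpf \<sigma> V j) (morph_word \<sigma> V @ w))"
    using seg_W[of "j - 1" j \<sigma> V w] drop_take_one[of "j - 1" V] j j1 by simp
  also have "\<dots> = drop (bpf \<sigma> V (j - 1)) P @ c # take i0 u" using tk hb by simp
  finally have left: "\<exists>P'. \<sigma> (V ! (j - 1)) = P' @ c # take i0 u" by blast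
  have j'l: "j' < length V"
  proof (rule ccontr)
    assume "\<not> ?thesis"
    then have "j' = length V" using j' by simp
    then have "bpf \<sigma> V j' = length (morph_word \<sigma> V)" by simp
    then show False using j' lenW i1w by simp
  qed
  have hb2: "bpf \<sigma> V (Suc j') + length w > length P + 1 + length u"
  proof (rule ccontr)
    assume nh: "\<not> ?thesis"
    have lt: "bpf \<sigma> V j' < bpf \<sigma> V (Suc j')" using bpf_strict[OF rm, of j' "Suc j'" V] j'l by simp
    have "bpf \<sigma> V (Suc j') - length (P @ [c]) \<in> Oc"
      unfolding Oc_def using nh lt j' j'l by (intro emb2[OF rm W1]) auto
    then have "bpf \<sigma> V (Suc j') - length (P @ [c]) \<le> i1" using maxO by blast
    then show False using lt j' by simp
  qed
  obtain t where t: "drop (bpf \<sigma> V j') (morph_word \<sigma> V @ w) = \<sigma> (V ! j') @ w @ t"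
    using blk[OF rm j'l] by blast
  have "drop (bpf \<sigma> V j') (morph_word \<sigma> V @ w) = drop i1 u @ d # Q"
    using j'(2) i1w unfolding W by simp
  then have e: "drop i1 u @ d # Q = (\<sigma> (V ! j') @ w) @ t" using t by simp
  have "length (drop i1 u) < length (\<sigma> (V ! j') @ w)"
    using hb2 bpf_Suc[OF j'l, of \<sigma>] j'(2) i1w by (simp only: length_drop length_append)
  then have right: "\<exists>Q'. \<sigma> (V ! j') @ w = drop i1 u @ d # Q'" using app_pre[OF e] by blast
  have "morph_word \<sigma> (drop j (take j' V)) = drop (bpf \<sigma> V j) (take (bpf \<sigma> V j') (morph_word \<sigma> V @ w))"
    using seg_W[OF jj, of \<sigma> V w] by simp
  also have "\<dots> = drop i0 (take i1 u)" using j(2) j'(2) i01 i1w unfolding W by simp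
  finally have mid: "morph_word \<sigma> (drop j (take j' V)) = drop i0 (take i1 u)" .
  show ?thesis using j1 jj j'l left right mid unfolding i0_def i1_def Oc_def by blast
qed



lemma base:
  assumes rm: "return_morphism \<sigma> w" and Mb: "\<And>a. length (\<sigma> a) \<le> M" and M1: "M \<ge> 1"
    and W: "morph_word \<sigma> V @ w = P @ u @ Q"
    and len: "M * (N + 1) + length w \<le> length u + 1"
  shows "occurrences w u \<noteq> {} \<and> (\<exists>j j'. j \<le> j' \<and> j' \<le> length V \<and> N \<le> j' - j \<and>
     morph_word \<sigma> (drop j (take j' V)) = drop (Min (occurrences w u)) (take (Max (occurrences w u)) u))"
proof -
  define Oc where "Oc = occurrences w u"
  have fin: "finite Oc" unfolding Oc_def by (rule occ_fin)
  have MN: "M * (N + 1) = M * N + M" by simp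
  have MleMN: "M \<le> M * (N + 1)" by simp
  have lenW: "length (morph_word \<sigma> V) + length w = length P + length u + length Q"
    using arg_cong[OF W, of length] by simp
  have uw: "length w + M \<le> length u + 1" using len MleMN by linarith
  have pA: "length P \<le> length (morph_word \<sigma> V)" using lenW uw M1 by linarith
  obtain jA where jA: "jA \<le> length V" "length P \<le> bpf \<sigma> V jA" "bpf \<sigma> V jA < length P + M"
    using cov1[OF Mb M1 pA] by blast
  have tA: "bpf \<sigma> V jA - length P \<in> Oc"
    unfolding Oc_def using jA uw by (intro emb2[OF rm W]) auto
  then have ne: "Oc \<noteq> {}" by blast
  define i0 where "i0 = Min Oc"
  define i1 where "i1 = Max Oc"
  have i0O: "i0 \<in> Oc" and i1O: "i1 \<in> Oc" using ne fin unfolding i0_def i1_def by auto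
  have i0M: "i0 < M" using Min_le[OF fin tA] jA unfolding i0_def by linarith
  have pB: "length P + length u - length w \<le> length (morph_word \<sigma> V)" using lenW by linarith
  obtain jB where jB: "jB \<le> length V" "bpf \<sigma> V jB \<le> length P + length u - length w"
      "length P + length u - length w < bpf \<sigma> V jB + M"
    using cov2[OF Mb M1 pB] by blast
  have tB: "bpf \<sigma> V jB - length P \<in> Oc"
    unfolding Oc_def using jB uw by (intro emb2[OF rm W]) auto
  have i1B: "length u < i1 + M + length w"
    using Max_ge[OF fin tB] jB uw unfolding i1_def by linarith
  have i01: "i0 \<le> i1" using Min_le[OF fin i1O] unfolding i0_def by simp
  have i1w: "i1 + length w \<le> length u" using i1O unfolding Oc_def occurrences_def by simp
  obtain j where j: "j \<le> length V" "bpf \<sigma> V j = length P + i0"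
    using emb[OF rm W, of i0] i0O unfolding Oc_def by auto
  obtain j' where j': "j' \<le> length V" "bpf \<sigma> V j' = length P + i1"
    using emb[OF rm W, of i1] i1O unfolding Oc_def by auto
  have jj: "j \<le> j'"
  proof (rule ccontr)
    assume "\<not> j \<le> j'"
    then have "bpf \<sigma> V j' < bpf \<sigma> V j" using bpf_strict[OF rm, of j' j V] j by simp
    then show False using j j' i01 by simp
  qed
  have "morph_word \<sigma> (drop j (take j' V)) = drop (bpf \<sigma> V j) (take (bpf \<sigma> V j') (morph_word \<sigma> V @ w))"
    using seg_W[OF jj, of \<sigma> V w] by simp
  also have "\<dots> = drop i0 (take i1 u)" using j(2) j'(2) i01 i1w unfolding W by simp
  finally have mid: "morph_word \<sigma> (drop j (take j' V)) = drop i0 (take i1 u)" .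
  have "length (morph_word \<sigma> (drop j (take j' V))) \<le> M * length (drop j (take j' V))"
    by (rule mw_len_le[OF Mb])
  then have le1: "i1 - i0 \<le> M * (j' - j)" using mid j' i1w by simp
  have "N \<le> j' - j"
  proof (rule ccontr)
    assume "\<not> N \<le> j' - j"
    then have "j' - j + 1 \<le> N" by simp
    then have "M * (j' - j + 1) \<le> M * N" by (rule mult_le_mono2)
    then have "M * (j' - j) + M \<le> M * N" by simp
    then show False using le1 i1B i0M len MN i01 by linarith
  qed
  then show ?thesis using ne jj j' mid unfolding Oc_def i0_def i1_def by blast
qed

lemma Fac_R:
  assumes rm: "return_morphism \<sigma> w" and extX: "\<And>V. V \<in> lang X \<Longrightarrow> \<exists>a b. a # V @ [b] \<in> lang X"
    and z: "z \<in> Fac X \<sigma> w"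
  shows "\<exists>d. z @ [d] \<in> Fac X \<sigma> w"
proof -
  obtain V P Q where V: "V \<in> lang X" and W: "morph_word \<sigma> V @ w = P @ z @ Q"
    using z unfolding Fac_def by blast
  show ?thesis
  proof (cases Q)
    case (Cons d Q')
    then show ?thesis using V W unfolding Fac_def by (intro exI[of _ d]) force
  next
    case Nil
    obtain a b where "a # V @ [b] \<in> lang X" using extX[OF V] by blast
    then have Vb: "V @ [b] \<in> lang X" using lang_D2[of "[a]" "V @ [b]"] by simp
    obtain t where t: "\<sigma> b @ w = w @ t" using rm_start[OF rm] by blast
    have "t \<noteq> []" using t rm_ne[OF rm, of b] by (metis append_Nil2 append_self_conv2 same_append_eq)
    then obtain d t' where t': "t = d # t'" by (cases t) auto
    have "morph_word \<sigma> (V @ [b]) @ w = P @ (z @ [d]) @ t'"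
      using W t t' Nil by simp
    then show ?thesis using Vb unfolding Fac_def by blast
  qed
qed

lemma Fac_L:
  assumes rm: "return_morphism \<sigma> w" and extX: "\<And>V. V \<in> lang X \<Longrightarrow> \<exists>a b. a # V @ [b] \<in> lang X"
    and z: "z \<in> Fac X \<sigma> w"
  shows "\<exists>c. c # z \<in> Fac X \<sigma> w"
proof -
  obtain V P Q where V: "V \<in> lang X" and W: "morph_word \<sigma> V @ w = P @ z @ Q"
    using z unfolding Fac_def by blast
  show ?thesis
  proof (cases "P = []")
    case False
    then have "P = butlast P @ [last P]" by simp
    then have "morph_word \<sigma> V @ w = butlast P @ (last P # z) @ Q" using W by (metis append.assoc append_Cons append_Nil)
    then show ?thesis using V unfolding Fac_def by blast
  next
    case True
    obtain a b where "a # V @ [b] \<in> lang X" using extX[OF V] by blast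
    then have aV: "a # V \<in> lang X" using lang_D1[of "a # V" "[b]"] by simp
    have "\<sigma> a \<noteq> []" using rm_ne[OF rm] .
    then have sa: "\<sigma> a = butlast (\<sigma> a) @ [last (\<sigma> a)]" by simp
    have "morph_word \<sigma> (a # V) @ w = butlast (\<sigma> a) @ (last (\<sigma> a) # z) @ Q"
    proof -
      have "morph_word \<sigma> (a # V) @ w = \<sigma> a @ z @ Q" using W True by simp
      also have "\<dots> = butlast (\<sigma> a) @ (last (\<sigma> a) # z) @ Q" by (subst sa) simp
      finally show ?thesis .
    qed
    then show ?thesis using aV unfolding Fac_def by blast
  qed
qed



lemma cuniq: "Z = P1 @ c1 # s \<Longrightarrow> Z = P2 @ c2 # s \<Longrightarrow> c1 = c2"
proof -
  assume a: "Z = P1 @ c1 # s" "Z = P2 @ c2 # s"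
  then have "length P1 = length P2" by (metis add_right_cancel length_Cons length_append)
  then show ?thesis using a by simp
qed

lemma duniq: "Z = r @ d1 # Q1 \<Longrightarrow> Z = r @ d2 # Q2 \<Longrightarrow> d1 = d2"
  by simp

lemma Ydend:
  fixes X :: "(int \<Rightarrow> 'a) set" and \<sigma> :: "'a \<Rightarrow> 'b list" and Y :: "(int \<Rightarrow> 'b) set"
  assumes rm: "return_morphism \<sigma> w"
    and extX: "\<And>V. V \<in> lang X \<Longrightarrow> \<exists>a b. a # V @ [b] \<in> lang X"
    and Mb: "\<And>a. length (\<sigma> a) \<le> M" and M1: "M \<ge> 1"
    and ds: "\<And>v. v \<in> lang X \<Longrightarrow> N \<le> length v \<Longrightarrow>
        \<exists>\<alpha> \<beta>. (\<alpha>,\<beta>) \<in> ext_B X v \<and> (\<forall>a b. (a,b) \<in> ext_B X v \<longrightarrow> a = \<alpha> \<or> b = \<beta>)"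
    and LY: "\<And>z. z \<in> lang Y \<longleftrightarrow> z \<in> Fac X \<sigma> w"
    and u: "u \<in> lang Y" and len: "M * (N + 1) + length w \<le> length u + 1"
  shows "dendric Y u"
proof -
  have inj: "inj (morph_word \<sigma>)" using rm by (simp add: return_morphism_def)
  obtain V0 P0 Q0 where V0: "V0 \<in> lang X" and W0: "morph_word \<sigma> V0 @ w = P0 @ u @ Q0"
    using u LY unfolding Fac_def by blast
  define i0 where "i0 = Min (occurrences w u)"
  define i1 where "i1 = Max (occurrences w u)"
  obtain j j' where ne: "occurrences w u \<noteq> {}" and jj: "j \<le> j'" "j' \<le> length V0" "N \<le> j' - j"
    and mid: "morph_word \<sigma> (drop j (take j' V0)) = drop i0 (take i1 u)"
    using base[OF rm Mb M1 W0 len] unfolding i0_def i1_def by blast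
  define v' where "v' = drop j (take j' V0)"
  define s where "s = take i0 u"
  define r where "r = drop i1 u"
  have v'L: "v' \<in> lang X" unfolding v'_def using lang_seg[OF V0 jj(1)] .
  have v'N: "N \<le> length v'" unfolding v'_def using jj by simp
  have i0O: "i0 \<in> occurrences w u" and i1O: "i1 \<in> occurrences w u"
    using ne occ_fin[of w u] unfolding i0_def i1_def by auto
  have i01: "i0 \<le> i1" using i1O occ_fin[of w u] unfolding i0_def by simp
  have i1u: "i1 \<le> length u" using i1O unfolding occurrences_def by simp
  have udec: "u = s @ morph_word \<sigma> v' @ r"
    unfolding s_def r_def v'_def mid using i01 i1u
    by (metis append.assoc append_take_drop_id take_take min.absorb1 drop_take)
  have char: "(c,d) \<in> ext_B Y u \<longleftrightarrow> (\<exists>a b. a # v' @ [b] \<in> lang X \<and> (\<exists>P'. \<sigma> a = P' @ c # s) \<and>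
       (\<exists>Q'. \<sigma> b @ w = r @ d # Q'))" for c d
  proof
    assume "(c,d) \<in> ext_B Y u"
    then have "c # u @ [d] \<in> Fac X \<sigma> w" using LY by (simp add: ext_B_def)
    then obtain V P Q where V: "V \<in> lang X" and W: "morph_word \<sigma> V @ w = P @ (c # u @ [d]) @ Q"
      unfolding Fac_def by blast
    then have W': "morph_word \<sigma> V @ w = P @ c # u @ d # Q" by simp
    obtain j1 j1' where h: "1 \<le> j1" "j1 \<le> j1'" "j1' < length V"
      "\<exists>P'. \<sigma> (V ! (j1 - 1)) = P' @ c # s" "\<exists>Q'. \<sigma> (V ! j1') @ w = r @ d # Q'"
      "morph_word \<sigma> (drop j1 (take j1' V)) = drop i0 (take i1 u)"
      using ext_dir[OF rm W' ne] unfolding s_def r_def i0_def i1_def by blast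
    have "drop j1 (take j1' V) = v'"
      using h(6) mid inj unfolding v'_def by (metis injD)
    then have "V ! (j1 - 1) # v' @ [V ! j1'] = drop (j1 - 1) (take (Suc j1') V)"
      using drop_take_ext[OF h(1-3)] by simp
    moreover have "drop (j1 - 1) (take (Suc j1') V) \<in> lang X"
      using lang_seg[OF V, of "j1 - 1" "Suc j1'"] h by simp
    ultimately show "\<exists>a b. a # v' @ [b] \<in> lang X \<and> (\<exists>P'. \<sigma> a = P' @ c # s) \<and> (\<exists>Q'. \<sigma> b @ w = r @ d # Q')"
      using h(4,5) by metis
  next
    assume "\<exists>a b. a # v' @ [b] \<in> lang X \<and> (\<exists>P'. \<sigma> a = P' @ c # s) \<and> (\<exists>Q'. \<sigma> b @ w = r @ d # Q')"
    then obtain a b P' Q' where ab: "a # v' @ [b] \<in> lang X" "\<sigma> a = P' @ c # s" "\<sigma> b @ w = r @ d # Q'"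
      by blast
    have "morph_word \<sigma> (a # v' @ [b]) @ w = P' @ (c # u @ [d]) @ Q'"
      using ab(2,3) udec by simp
    then have "c # u @ [d] \<in> Fac X \<sigma> w" using ab(1) unfolding Fac_def by blast
    then show "(c,d) \<in> ext_B Y u" using LY by (simp add: ext_B_def)
  qed
  obtain \<alpha>0 \<beta>0 where d0: "(\<alpha>0,\<beta>0) \<in> ext_B X v'" "\<And>a b. (a,b) \<in> ext_B X v' \<Longrightarrow> a = \<alpha>0 \<or> b = \<beta>0"
    using ds[OF v'L v'N] by blast
  have uF: "u \<in> Fac X \<sigma> w" using u LY by simp
  obtain c1 where "c1 # u \<in> Fac X \<sigma> w" using Fac_L[OF rm extX uF] by blast
  then obtain d1 where "(c1 # u) @ [d1] \<in> Fac X \<sigma> w" using Fac_R[OF rm extX] by blast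
  then have e1: "(c1,d1) \<in> ext_B Y u" using LY by (simp add: ext_B_def)
  then obtain a1 b1 P1 Q1 where ab1: "a1 # v' @ [b1] \<in> lang X" "\<sigma> a1 = P1 @ c1 # s" "\<sigma> b1 @ w = r @ d1 # Q1"
    using char by blast
  have ab1X: "a1 = \<alpha>0 \<or> b1 = \<beta>0" using d0(2) ab1(1) by (simp add: ext_B_def)
  have dstarY: "\<exists>\<alpha> \<beta>. (\<alpha>,\<beta>) \<in> ext_B Y u \<and> (\<forall>c d. (c,d) \<in> ext_B Y u \<longrightarrow> c = \<alpha> \<or> d = \<beta>)"
  proof (cases "\<exists>c P'. \<sigma> \<alpha>0 = P' @ c # s")
    case cA: True
    then obtain c\<alpha> P\<alpha> where c\<alpha>: "\<sigma> \<alpha>0 = P\<alpha> @ c\<alpha> # s" by blast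
    show ?thesis
    proof (cases "\<exists>d Q'. \<sigma> \<beta>0 @ w = r @ d # Q'")
      case True
      then obtain d\<beta> Q\<beta> where d\<beta>: "\<sigma> \<beta>0 @ w = r @ d\<beta> # Q\<beta>" by blast
      have "(c\<alpha>, d\<beta>) \<in> ext_B Y u" using char d0(1) c\<alpha> d\<beta> by (auto simp: ext_B_def)
      moreover have "c = c\<alpha> \<or> d = d\<beta>" if cd: "(c,d) \<in> ext_B Y u" for c d
      proof -
        obtain a b P' Q' where ab: "a # v' @ [b] \<in> lang X" "\<sigma> a = P' @ c # s" "\<sigma> b @ w = r @ d # Q'"
          using char[of c d] cd by blast
        then have "a = \<alpha>0 \<or> b = \<beta>0" using d0(2) by (simp add: ext_B_def)
        then show ?thesis using ab c\<alpha> d\<beta> cuniq duniq by metis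
      qed
      ultimately show ?thesis by blast
    next
      case False
      then have "b1 \<noteq> \<beta>0" using ab1(3) by blast
      then have "a1 = \<alpha>0" using ab1X by simp
      then have "c1 = c\<alpha>" using ab1(2) c\<alpha> cuniq by metis
      moreover have "c = c\<alpha>" if cd: "(c,d) \<in> ext_B Y u" for c d
      proof -
        obtain a b P' Q' where ab: "a # v' @ [b] \<in> lang X" "\<sigma> a = P' @ c # s" "\<sigma> b @ w = r @ d # Q'"
          using char[of c d] cd by blast
        then have "a = \<alpha>0 \<or> b = \<beta>0" using d0(2) by (simp add: ext_B_def)
        then have "a = \<alpha>0" using False ab(3) by blast
        then show ?thesis using ab c\<alpha> cuniq by metis
      qed
      ultimately show ?thesis using e1 by blast
    qed
  next
    case cA: False
    then have "a1 \<noteq> \<alpha>0" using ab1(2) by blast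
    then have "b1 = \<beta>0" using ab1X by simp
    then have d1: "\<sigma> \<beta>0 @ w = r @ d1 # Q1" using ab1(3) by simp
    have "d = d1" if cd: "(c,d) \<in> ext_B Y u" for c d
    proof -
      obtain a b P' Q' where ab: "a # v' @ [b] \<in> lang X" "\<sigma> a = P' @ c # s" "\<sigma> b @ w = r @ d # Q'"
        using char[of c d] cd by blast
      then have "a = \<alpha>0 \<or> b = \<beta>0" using d0(2) by (simp add: ext_B_def)
      then have "b = \<beta>0" using cA ab(2) by blast
      then show ?thesis using ab d1 duniq by metis
    qed
    then show ?thesis using e1 by blast
  qed
  then obtain \<alpha> \<beta> where ab: "(\<alpha>,\<beta>) \<in> ext_B Y u" "\<And>c d. (c,d) \<in> ext_B Y u \<Longrightarrow> c = \<alpha> \<or> d = \<beta>" by blast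
  show ?thesis
  proof (rule dstar_dendric[OF ab])
    fix a assume "a \<in> ext_L Y u"
    then have "a # u \<in> Fac X \<sigma> w" using LY by (simp add: ext_L_def)
    then obtain d where "(a # u) @ [d] \<in> Fac X \<sigma> w" using Fac_R[OF rm extX] by blast
    then show "\<exists>b. (a,b) \<in> ext_B Y u" using LY by (auto simp: ext_B_def)
  next
    fix b assume "b \<in> ext_R Y u"
    then have "u @ [b] \<in> Fac X \<sigma> w" using LY by (simp add: ext_R_def)
    then obtain c where "c # u @ [b] \<in> Fac X \<sigma> w" using Fac_L[OF rm extX] by blast
    then show "\<exists>a. (a,b) \<in> ext_B Y u" using LY by (auto simp: ext_B_def)
  qed
qed



lemma shift_closed:
  assumes sh: "shift_space X" and x: "x \<in> X"
  shows "(\<lambda>n. x (n + i)) \<in> X"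
proof -
  have img: "shift_map ` X = X" using sh by (simp add: shift_space_def)
  have fwd: "(\<lambda>n. x (n + int m)) \<in> X" for m
  proof (induction m)
    case 0 then show ?case using x by simp
  next
    case (Suc m)
    then have "shift_map (\<lambda>n. x (n + int m)) \<in> X" using img by blast
    moreover have "shift_map (\<lambda>n. x (n + int m)) = (\<lambda>n. x (n + int (Suc m)))"
      unfolding shift_map_def by (simp add: algebra_simps)
    ultimately show ?case by simp
  qed
  have bwd: "(\<lambda>n. x (n - int m)) \<in> X" for m
  proof (induction m)
    case 0 then show ?case using x by simp
  next
    case (Suc m)
    then obtain z where z: "z \<in> X" "shift_map z = (\<lambda>n. x (n - int m))" using img by (metis imageE)
    have "z = (\<lambda>n. x (n - int (Suc m)))"
    proof
      fix n
      have "z n = shift_map z (n - 1)" unfolding shift_map_def by simp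
      then show "z n = x (n - int (Suc m))" using z(2) by (simp add: algebra_simps)
    qed
    then show ?case using z by simp
  qed
  show ?thesis
  proof (cases "i \<ge> 0")
    case True
    then have "i = int (nat i)" by simp
    then show ?thesis using fwd[of "nat i"] by metis
  next
    case False
    then have "i = - int (nat (- i))" by simp
    then have "(\<lambda>n. x (n + i)) = (\<lambda>n. x (n - int (nat (- i))))" by (metis diff_conv_add_uminus)
    then show ?thesis using bwd by metis
  qed
qed

lemma extX:
  assumes x: "V \<in> lang X"
  shows "\<exists>a b. a # V @ [b] \<in> lang X"
proof -
  obtain x i where x: "x \<in> X" and V: "V = map (\<lambda>k. x (i + int k)) [0..<length V]"
    using assms unfolding lang_def by blast
  have "x (i - 1) # V @ [x (i + int (length V))] = map (\<lambda>k. x ((i - 1) + int k)) [0..<length (x (i - 1) # V @ [x (i + int (length V))])]"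
  proof (rule nth_equalityI)
    fix k assume k: "k < length (x (i - 1) # V @ [x (i + int (length V))])"
    have R: "map (\<lambda>k. x ((i - 1) + int k)) [0..<length (x (i - 1) # V @ [x (i + int (length V))])] ! k
        = x ((i - 1) + int k)" using k by (simp del: upt_Suc)
    show "(x (i - 1) # V @ [x (i + int (length V))]) ! k =
      map (\<lambda>k. x ((i - 1) + int k)) [0..<length (x (i - 1) # V @ [x (i + int (length V))])] ! k"
    proof (cases k)
      case 0 then show ?thesis using R by simp
    next
      case (Suc k')
      show ?thesis
      proof (cases "k' < length V")
        case True
        then have "V ! k' = x (i + int k')" using arg_cong[OF V, of "\<lambda>l. l ! k'"] by simp
        then show ?thesis using Suc True R by (simp add: nth_append)
      next
        case False
        then have "k' = length V" using k Suc by simp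
        then show ?thesis using Suc R by (simp add: nth_append)
      qed
    qed
  qed simp
  then have "x (i - 1) # V @ [x (i + int (length V))] \<in> lang X"
    unfolding lang_def using x by (intro CollectI bexI[of _ x] exI[of _ "i - 1"])
  then show ?thesis by blast
qed

lemma bp_step: "block_pos \<sigma> x (i + 1) = block_pos \<sigma> x i + int (length (\<sigma> (x i)))"
proof (cases "i \<ge> 0")
  case True
  have "{0..<i+1} = insert i {0..<i}" using True by auto
  then show ?thesis using True unfolding block_pos_def by simp
next
  case False
  show ?thesis
  proof (cases "i = -1")
    case True
    have "{-1..<0::int} = {-1}" by auto
    then show ?thesis using True unfolding block_pos_def by simp
  next
    case False2: False
    have "{i..<0} = insert i {i+1..<0}" using False by auto
    then show ?thesis using False False2 unfolding block_pos_def by simp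
  qed
qed

lemma bp_0[simp]: "block_pos \<sigma> x 0 = 0" by (simp add: block_pos_def)

lemma bp_add: "block_pos \<sigma> x (i + int m) =
   block_pos \<sigma> x i + int (length (morph_word \<sigma> (map (\<lambda>t. x (i + int t)) [0..<m])))"
proof (induction m)
  case 0 then show ?case by simp
next
  case (Suc m)
  have "block_pos \<sigma> x (i + int (Suc m)) = block_pos \<sigma> x (i + int m + 1)" by (simp add: algebra_simps)
  also have "\<dots> = block_pos \<sigma> x (i + int m) + int (length (\<sigma> (x (i + int m))))" by (rule bp_step)
  finally show ?case using Suc by simp
qed

lemma bp_ge: "return_morphism \<sigma> w \<Longrightarrow> block_pos \<sigma> x (i + int m) \<ge> block_pos \<sigma> x i + int m"
  using bp_add[of \<sigma> x i m] mw_len[of \<sigma> w "map (\<lambda>t. x (i + int t)) [0..<m]"] by simp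

lemma bp_mono: "i \<le> i' \<Longrightarrow> block_pos \<sigma> x i \<le> block_pos \<sigma> x i'"
  using bp_add[of \<sigma> x i "nat (i' - i)"] by simp

lemma blk_exists:
  assumes rm: "return_morphism \<sigma> w"
  shows "\<exists>i. block_pos \<sigma> x i \<le> n \<and> n < block_pos \<sigma> x (i + 1)"
proof -
  define ilo where "ilo = - int (nat \<bar>n\<bar>)"
  have "block_pos \<sigma> x (ilo + int (nat \<bar>n\<bar>)) \<ge> block_pos \<sigma> x ilo + int (nat \<bar>n\<bar>)" by (rule bp_ge[OF rm])
  then have lo: "block_pos \<sigma> x ilo \<le> n" unfolding ilo_def by simp
  have st: "block_pos \<sigma> x j < block_pos \<sigma> x (j + 1)" for j
    using bp_step[of \<sigma> x j] rm_ne[OF rm, of "x j"] by simp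
  have "\<exists>i. block_pos \<sigma> x i \<le> block_pos \<sigma> x ilo + int m \<and> block_pos \<sigma> x ilo + int m < block_pos \<sigma> x (i + 1)" for m
  proof (induction m)
    case 0 then show ?case using st[of ilo] by (intro exI[of _ ilo]) simp
  next
    case (Suc m)
    then obtain i where i: "block_pos \<sigma> x i \<le> block_pos \<sigma> x ilo + int m"
      "block_pos \<sigma> x ilo + int m < block_pos \<sigma> x (i + 1)" by blast
    show ?case
    proof (cases "block_pos \<sigma> x ilo + int (Suc m) < block_pos \<sigma> x (i + 1)")
      case True then show ?thesis using i by (intro exI[of _ i]) simp
    next
      case False
      then show ?thesis using i st[of "i + 1"] by (intro exI[of _ "i + 1"]) simp
    qed
  qed
  from this[of "nat (n - block_pos \<sigma> x ilo)"] show ?thesis using lo by simp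
qed

lemma blk_unique:
  assumes rm: "return_morphism \<sigma> w"
    and a: "block_pos \<sigma> x i \<le> n" "n < block_pos \<sigma> x (i + 1)"
    and b: "block_pos \<sigma> x i' \<le> n" "n < block_pos \<sigma> x (i' + 1)"
  shows "i = i'"
proof (rule ccontr)
  assume "i \<noteq> i'"
  then have "i + 1 \<le> i' \<or> i' + 1 \<le> i" by linarith
  then show False
  proof
    assume "i + 1 \<le> i'" then show False using bp_mono[of "i + 1" i' \<sigma> x] a b by simp
  next
    assume "i' + 1 \<le> i" then show False using bp_mono[of "i' + 1" i \<sigma> x] a b by simp
  qed
qed

lemma seg_int:
  assumes H: "\<And>i j. j < length (\<sigma> (x i)) \<Longrightarrow> y (block_pos \<sigma> x i + int j - k) = \<sigma> (x i) ! j"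
  shows "t < length (morph_word \<sigma> (map (\<lambda>t. x (i + int t)) [0..<m])) \<Longrightarrow>
     y (block_pos \<sigma> x i - k + int t) = morph_word \<sigma> (map (\<lambda>t. x (i + int t)) [0..<m]) ! t"
proof (induction m arbitrary: t)
  case 0 then show ?case by simp
next
  case (Suc m)
  define A where "A = morph_word \<sigma> (map (\<lambda>t. x (i + int t)) [0..<m])"
  have eq: "morph_word \<sigma> (map (\<lambda>t. x (i + int t)) [0..<Suc m]) = A @ \<sigma> (x (i + int m))"
    unfolding A_def by simp
  show ?case
  proof (cases "t < length A")
    case True
    then show ?thesis using Suc.IH[of t] unfolding eq A_def by (simp add: nth_append)
  next
    case False
    define t' where "t' = t - length A"
    have t': "t' < length (\<sigma> (x (i + int m)))" using Suc.prems False unfolding eq t'_def by simp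
    have "block_pos \<sigma> x (i + int m) = block_pos \<sigma> x i + int (length A)" unfolding A_def by (rule bp_add)
    then have "block_pos \<sigma> x i - k + int t = block_pos \<sigma> x (i + int m) + int t' - k"
      using False unfolding t'_def by simp
    then have "y (block_pos \<sigma> x i - k + int t) = \<sigma> (x (i + int m)) ! t'"
      by (simp only:) (rule H[OF t'])
    moreover have "(A @ \<sigma> (x (i + int m))) ! t = \<sigma> (x (i + int m)) ! t'"
      using False unfolding t'_def by (simp add: nth_append)
    ultimately show ?thesis unfolding eq by simp
  qed
qed



lemma langY_sub:
  assumes rm: "return_morphism \<sigma> w" and u: "u \<in> lang (morph_shift \<sigma> X)"
  shows "u \<in> Fac X \<sigma> w"
proof -
  obtain y p where y: "y \<in> morph_shift \<sigma> X" and up: "u = map (\<lambda>t. y (p + int t)) [0..<length u]"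
    using u unfolding lang_def by blast
  obtain x k where x: "x \<in> X" and k: "0 \<le> k"
    and H: "\<And>i j. j < length (\<sigma> (x i)) \<Longrightarrow> y (block_pos \<sigma> x i + int j - k) = \<sigma> (x i) ! j"
    using y unfolding morph_shift_def by blast
  obtain i where i: "block_pos \<sigma> x i \<le> p + k" using blk_exists[OF rm, of x "p + k"] by blast
  define off where "off = nat (p + k - block_pos \<sigma> x i)"
  define m where "m = off + length u"
  define Vx where "Vx = map (\<lambda>t. x (i + int t)) [0..<m]"
  have VxL: "Vx \<in> lang X" unfolding lang_def Vx_def using x by auto
  have lm: "length (morph_word \<sigma> Vx) \<ge> m" using mw_len[OF rm, of Vx] unfolding Vx_def by simp
  have offi: "int off = p + k - block_pos \<sigma> x i" unfolding off_def using i by simp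
  have ueq: "u = take (length u) (drop off (morph_word \<sigma> Vx))"
  proof (rule nth_equalityI)
    show "length u = length (take (length u) (drop off (morph_word \<sigma> Vx)))" using lm unfolding m_def by simp
  next
    fix t assume t: "t < length u"
    have "u ! t = y (p + int t)" using arg_cong[OF up, of "\<lambda>l. l ! t"] t by simp
    also have "p + int t = block_pos \<sigma> x i - k + int (off + t)" using offi by simp
    also have "y (block_pos \<sigma> x i - k + int (off + t)) = morph_word \<sigma> Vx ! (off + t)"
    proof -
      have lt: "off + t < length (morph_word \<sigma> Vx)" using lm t m_def by simp
      show ?thesis using seg_int[OF H lt[unfolded Vx_def]] unfolding Vx_def by simp
    qed
    finally show "u ! t = take (length u) (drop off (morph_word \<sigma> Vx)) ! t" using t lm m_def by simp
  qed
  have "morph_word \<sigma> Vx = take off (morph_word \<sigma> Vx) @ take (length u) (drop off (morph_word \<sigma> Vx))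
       @ drop (length u) (drop off (morph_word \<sigma> Vx))" by (simp only: append_take_drop_id)
  then have "morph_word \<sigma> Vx @ w = take off (morph_word \<sigma> Vx) @ u @ (drop (length u) (drop off (morph_word \<sigma> Vx)) @ w)"
    using ueq by (metis append.assoc)
  then show ?thesis using VxL unfolding Fac_def by blast
qed

lemma langY_sup:
  assumes sh: "shift_space X" and rm: "return_morphism \<sigma> w" and u: "u \<in> Fac X \<sigma> w"
  shows "u \<in> lang (morph_shift \<sigma> X)"
proof -
  obtain V P Q where V: "V \<in> lang X" and W: "morph_word \<sigma> V @ w = P @ u @ Q"
    using u unfolding Fac_def by blast
  obtain x i where x: "x \<in> X" and Vx: "V = map (\<lambda>k. x (i + int k)) [0..<length V]"
    using V unfolding lang_def by blast
  define x' where "x' = (\<lambda>n. x (n + i))"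
  have x'X: "x' \<in> X" unfolding x'_def by (rule shift_closed[OF sh x])
  have V': "V = map (\<lambda>t. x' (0 + int t)) [0..<length V]"
    using Vx unfolding x'_def by (simp add: add.commute)
  define bq where "bq = block_pos \<sigma> x'"
  define blk where "blk n = (SOME j. bq j \<le> n \<and> n < bq (j + 1))" for n
  define y where "y n = \<sigma> (x' (blk n)) ! nat (n - bq (blk n))" for n
  have blk: "bq (blk n) \<le> n \<and> n < bq (blk n + 1)" for n
    unfolding blk_def bq_def using someI_ex[OF blk_exists[OF rm, of x' n]] by simp
  have H: "y (bq j + int t) = \<sigma> (x' j) ! t" if t: "t < length (\<sigma> (x' j))" for j t
  proof -
    have "bq j \<le> bq j + int t" "bq j + int t < bq (j + 1)" using t bp_step[of \<sigma> x' j] unfolding bq_def by auto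
    then have "blk (bq j + int t) = j" using blk[of "bq j + int t"] blk_unique[OF rm] unfolding bq_def by blast
    then show ?thesis unfolding y_def by simp
  qed
  have yY: "y \<in> morph_shift \<sigma> X"
    unfolding morph_shift_def using x'X rm_ne[OF rm, of "x' 0"] H unfolding bq_def
    by (intro CollectI bexI[of _ x'] exI[of _ 0]) auto
  have wst: "\<forall>j. y (bq j + int t) = w ! t" if "t < length w" for t
    using that
  proof (induction t rule: less_induct)
    case (less t)
    show ?case
    proof
      fix j
      obtain t0 where t0: "\<sigma> (x' j) @ w = w @ t0" using rm_start[OF rm] by blast
      have wt: "(\<sigma> (x' j) @ w) ! t = w ! t" using t0 less.prems by (simp add: nth_append)
      show "y (bq j + int t) = w ! t"
      proof (cases "t < length (\<sigma> (x' j))")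
        case True
        then show ?thesis using H[OF True] wt by (simp add: nth_append)
      next
        case False
        have ne: "length (\<sigma> (x' j)) > 0" using rm_ne[OF rm] by simp
        have eq: "bq j + int t = bq (j + 1) + int (t - length (\<sigma> (x' j)))"
          using False bp_step[of \<sigma> x' j] unfolding bq_def by simp
        have lt: "t - length (\<sigma> (x' j)) < t" using ne False by linarith
        have lw: "t - length (\<sigma> (x' j)) < length w" using less.prems by simp
        have "y (bq j + int t) = w ! (t - length (\<sigma> (x' j)))"
          unfolding eq using less.IH[OF lt lw] by blast
        also have "\<dots> = (\<sigma> (x' j) @ w) ! t" using False by (simp add: nth_append)
        finally show ?thesis using wt by simp
      qed
    qed
  qed
  have H0: "y (block_pos \<sigma> x' i + int j - 0) = \<sigma> (x' i) ! j" if "j < length (\<sigma> (x' i))" for i j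
    using H[OF that] unfolding bq_def by simp
  have segV: "y (int t) = morph_word \<sigma> V ! t" if "t < length (morph_word \<sigma> V)" for t
    using seg_int[of \<sigma> x' y 0 t 0 "length V", OF H0] that V' by simp
  have bqV: "bq (int (length V)) = int (length (morph_word \<sigma> V))"
    using bp_add[of \<sigma> x' 0 "length V"] V' unfolding bq_def by simp
  have all: "y (int t) = (morph_word \<sigma> V @ w) ! t" if t: "t < length (morph_word \<sigma> V @ w)" for t
  proof (cases "t < length (morph_word \<sigma> V)")
    case True then show ?thesis using segV by (simp add: nth_append)
  next
    case False
    have "y (int t) = y (bq (int (length V)) + int (t - length (morph_word \<sigma> V)))"
      using bqV False by simp
    also have "\<dots> = w ! (t - length (morph_word \<sigma> V))"
    proof -
      have "t - length (morph_word \<sigma> V) < length w" using t False by simp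
      from wst[OF this] show ?thesis by blast
    qed
    finally show ?thesis using False by (simp add: nth_append)
  qed
  have "u = map (\<lambda>t. y (int (length P) + int t)) [0..<length u]"
  proof (rule nth_equalityI)
    fix t assume t: "t < length u"
    have "y (int (length P) + int t) = (P @ u @ Q) ! (length P + t)"
      using all[of "length P + t"] W t arg_cong[OF W, of length] by simp
    then show "u ! t = map (\<lambda>t. y (int (length P) + int t)) [0..<length u] ! t" using t by (simp add: nth_append)
  qed simp
  then show ?thesis using yY unfolding lang_def by blast
qed

lemma langY: "shift_space X \<Longrightarrow> return_morphism \<sigma> w \<Longrightarrow>
   z \<in> lang (morph_shift \<sigma> X) \<longleftrightarrow> z \<in> Fac X \<sigma> w"
  using langY_sub langY_sup by blast



lemma dendric_no4:
  assumes d: "dendric X u" and ne: "a1 \<noteq> a2" "b1 \<noteq> b2"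
    and w: "a1 # u @ [b1] \<in> lang X" "a2 # u @ [b1] \<in> lang X" "a1 # u @ [b2] \<in> lang X" "a2 # u @ [b2] \<in> lang X"
  shows False
proof -
  define cs where "cs = [Inl a1, Inr b1, Inl a2, Inr b2]"
  have L: "a \<in> ext_L X u" if "a # u @ [b] \<in> lang X" for a b
    using lang_D1[of "a # u" "[b]"] that by (simp add: ext_L_def)
  have R: "b \<in> ext_R X u" if "a # u @ [b] \<in> lang X" for a b
    using lang_D2[of "[a]" "u @ [b]"] that by (simp add: ext_R_def)
  have E: "ext_graph_E X u (Inl a) (Inr b)" "ext_graph_E X u (Inr b) (Inl a)" if "a # u @ [b] \<in> lang X" for a b
    using that unfolding ext_graph_E_def ext_B_def by auto
  have "graph_cycle (ext_graph_V X u) (ext_graph_E X u) cs"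
    unfolding graph_cycle_def cs_def
  proof (intro conjI)
    show "set [Inl a1, Inr b1, Inl a2, Inr b2] \<subseteq> ext_graph_V X u"
      using L[OF w(1)] L[OF w(2)] R[OF w(1)] R[OF w(3)] unfolding ext_graph_V_def by auto
    show "\<forall>i<length [Inl a1, Inr b1, Inl a2, Inr b2].
        ext_graph_E X u ([Inl a1, Inr b1, Inl a2, Inr b2] ! i)
          ([Inl a1, Inr b1, Inl a2, Inr b2] ! ((i + 1) mod length [Inl a1, Inr b1, Inl a2, Inr b2]))"
    proof (intro allI impI)
      fix i assume "i < length [Inl a1, Inr b1, Inl a2, Inr b2]"
      then have "i = 0 \<or> i = 1 \<or> i = 2 \<or> i = 3" by auto
      then show "ext_graph_E X u ([Inl a1, Inr b1, Inl a2, Inr b2] ! i)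
          ([Inl a1, Inr b1, Inl a2, Inr b2] ! ((i + 1) mod length [Inl a1, Inr b1, Inl a2, Inr b2]))"
        using E[OF w(1)] E[OF w(2)] E[OF w(3)] E[OF w(4)] by auto
    qed
  qed (use ne in auto)
  then show False using d unfolding dendric_def graph_tree_def by blast
qed

lemma rev_mem: "z \<in> rev ` L \<longleftrightarrow> rev z \<in> L"
  by (metis image_iff rev_rev_ident)

lemma main_core:
  fixes X :: "(int \<Rightarrow> 'a::finite) set" and \<sigma> :: "'a \<Rightarrow> 'b list"
  assumes sh: "shift_space X" and rm: "return_morphism \<sigma> w"
    and Li: "\<forall>v\<in>lang X. left_special X v \<and> length v \<ge> N \<longrightarrow>
          (\<exists>!a. left_special X (v @ [a])) \<and>
          (\<forall>a. left_special X (v @ [a]) \<longrightarrow> ext_L X (v @ [a]) = ext_L X v)"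
    and Ri: "\<forall>v\<in>lang X. right_special X v \<and> length v \<ge> N \<longrightarrow>
          (\<exists>!a. right_special X (a # v)) \<and>
          (\<forall>a. right_special X (a # v) \<longrightarrow> ext_R X (a # v) = ext_R X v)"
  shows "\<forall>u\<in>lang (morph_shift \<sigma> X). length u \<ge> Max (range (\<lambda>a. length (\<sigma> a))) * (N + 1) + length w - 1
     \<longrightarrow> dendric (morph_shift \<sigma> X) u"
proof (intro ballI impI)
  fix u assume u: "u \<in> lang (morph_shift \<sigma> X)"
    and l: "length u \<ge> Max (range (\<lambda>a. length (\<sigma> a))) * (N + 1) + length w - 1"
  define M where "M = Max (range (\<lambda>a. length (\<sigma> a)))"
  have Mb: "length (\<sigma> a) \<le> M" for a unfolding M_def by (rule Max_ge) auto
  have M1: "M \<ge> 1" using Mb[of undefined] rm_ne[OF rm, of undefined] by (cases "\<sigma> undefined") auto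
  have len: "M * (N + 1) + length w \<le> length u + 1" using l unfolding M_def[symmetric] by linarith
  show "dendric (morph_shift \<sigma> X) u"
  proof (rule Ydend[OF rm extX Mb M1 _ _ u len])
    show "\<And>z. z \<in> lang (morph_shift \<sigma> X) \<longleftrightarrow> z \<in> Fac X \<sigma> w" using langY[OF sh rm] by blast
  next
    fix v assume v: "v \<in> lang X" "N \<le> length v"
    show "\<exists>\<alpha> \<beta>. (\<alpha>,\<beta>) \<in> ext_B X v \<and> (\<forall>a b. (a,b) \<in> ext_B X v \<longrightarrow> a = \<alpha> \<or> b = \<beta>)"
      by (rule X_dstar) (use extX[OF v(1)] Li Ri v in auto)
  qed
qed

theorem mainTheorem4:
  fixes X :: "(int \<Rightarrow> 'a::finite) set"
    and \<sigma> :: "'a \<Rightarrow> 'b::finite list"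
    and w :: "'b list"
  assumes "shift_space X"
    and "eventually_dendric X"
    and "return_morphism \<sigma> w"
  shows "eventually_dendric (morph_shift \<sigma> X) \<and>
    (\<forall>N::nat.
       (\<forall>v\<in>lang X. left_special X v \<and> length v \<ge> N \<longrightarrow>
          (\<exists>!a. left_special X (v @ [a])) \<and>
          (\<forall>a. left_special X (v @ [a]) \<longrightarrow> ext_L X (v @ [a]) = ext_L X v)) \<and>
       (\<forall>v\<in>lang X. right_special X v \<and> length v \<ge> N \<longrightarrow>
          (\<exists>!a. right_special X (a # v)) \<and>
          (\<forall>a. right_special X (a # v) \<longrightarrow> ext_R X (a # v) = ext_R X v))
       \<longrightarrow> dendric_threshold (morph_shift \<sigma> X)
             \<le> Max (range (\<lambda>a. length (\<sigma> a))) * (N + 1) + length w - 1)"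
proof -
  note sh = assms(1) and rm = assms(3)
  obtain T0 where T0: "\<forall>u\<in>lang X. length u \<ge> T0 \<longrightarrow> dendric X u"
    using assms(2) unfolding eventually_dendric_def by blast
  have no4: False if "length u \<ge> T0" "a1 \<noteq> a2" "b1 \<noteq> b2" "a1 # u @ [b1] \<in> lang X" "a2 # u @ [b1] \<in> lang X"
      "a1 # u @ [b2] \<in> lang X" "a2 # u @ [b2] \<in> lang X" for u a1 a2 b1 b2
  proof -
    have "u \<in> lang X" using that(4) lang_factor[of "[a1]" u "[b1]"] by simp
    then have "dendric X u" using T0 that(1) by blast
    then show False using dendric_no4[OF _ that(2,3,4,5,6,7)] by blast
  qed
  have exL: "\<exists>NL. \<forall>v. card {a. a # v \<in> lang X} \<ge> 2 \<and> length v \<ge> NL \<longrightarrow>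
     (\<exists>!b. card {a. a # v @ [b] \<in> lang X} \<ge> 2) \<and>
     (\<forall>b. card {a. a # v @ [b] \<in> lang X} \<ge> 2 \<longrightarrow> {a. a # v @ [b] \<in> lang X} = {a. a # v \<in> lang X})"
  proof (rule stab[where Lg="lang X", of T0])
    fix a u b assume "a # u @ [b] \<in> lang X" then show "a # u \<in> lang X" using lang_D1[of "a # u" "[b]"] by simp
  next
    fix u a1 a2 b1 b2 assume "T0 \<le> length u" "a1 \<noteq> a2" "b1 \<noteq> b2" "a1 # u @ [b1] \<in> lang X"
      "a2 # u @ [b1] \<in> lang X" "a1 # u @ [b2] \<in> lang X" "a2 # u @ [b2] \<in> lang X"
    then show False by (rule no4)
  qed
  then obtain NL where NL: "\<forall>v. card {a. a # v \<in> lang X} \<ge> 2 \<and> length v \<ge> NL \<longrightarrow>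
     (\<exists>!b. card {a. a # v @ [b] \<in> lang X} \<ge> 2) \<and>
     (\<forall>b. card {a. a # v @ [b] \<in> lang X} \<ge> 2 \<longrightarrow> {a. a # v @ [b] \<in> lang X} = {a. a # v \<in> lang X})"
    by blast
  have preR: "a # u \<in> rev ` lang X" if "a # u @ [b] \<in> rev ` lang X" for a u b
  proof -
    have "b # rev u @ [a] \<in> lang X" using that by (simp add: rev_mem)
    then have "rev u @ [a] \<in> lang X" using lang_D2[of "[b]" "rev u @ [a]"] by simp
    then show ?thesis by (simp add: rev_mem)
  qed
  have no4R: False if "length u \<ge> T0" "a1 \<noteq> a2" "b1 \<noteq> b2" "a1 # u @ [b1] \<in> rev ` lang X"
      "a2 # u @ [b1] \<in> rev ` lang X" "a1 # u @ [b2] \<in> rev ` lang X" "a2 # u @ [b2] \<in> rev ` lang X"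
    for u a1 a2 b1 b2
    using no4[of "rev u" b1 b2 a1 a2] that by (simp add: rev_mem)
  have exR: "\<exists>NR. \<forall>v. card {a. a # v \<in> rev ` lang X} \<ge> 2 \<and> length v \<ge> NR \<longrightarrow>
     (\<exists>!b. card {a. a # v @ [b] \<in> rev ` lang X} \<ge> 2) \<and>
     (\<forall>b. card {a. a # v @ [b] \<in> rev ` lang X} \<ge> 2 \<longrightarrow> {a. a # v @ [b] \<in> rev ` lang X} = {a. a # v \<in> rev ` lang X})"
  proof (rule stab[where Lg="rev ` lang X", of T0])
    fix a u b assume "a # u @ [b] \<in> rev ` lang X" then show "a # u \<in> rev ` lang X" by (rule preR)
  next
    fix u a1 a2 b1 b2 assume "T0 \<le> length u" "a1 \<noteq> a2" "b1 \<noteq> b2" "a1 # u @ [b1] \<in> rev ` lang X"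
      "a2 # u @ [b1] \<in> rev ` lang X" "a1 # u @ [b2] \<in> rev ` lang X" "a2 # u @ [b2] \<in> rev ` lang X"
    then show False by (rule no4R)
  qed
  then obtain NR where NR: "\<forall>v. card {a. a # v \<in> rev ` lang X} \<ge> 2 \<and> length v \<ge> NR \<longrightarrow>
     (\<exists>!b. card {a. a # v @ [b] \<in> rev ` lang X} \<ge> 2) \<and>
     (\<forall>b. card {a. a # v @ [b] \<in> rev ` lang X} \<ge> 2 \<longrightarrow> {a. a # v @ [b] \<in> rev ` lang X} = {a. a # v \<in> rev ` lang X})"
    by blast
  have eR1: "{a. a # rev v \<in> rev ` lang X} = ext_R X v" for v by (simp add: rev_mem ext_R_def)
  have eR2: "{a. a # rev v @ [b] \<in> rev ` lang X} = ext_R X (b # v)" for v b by (simp add: rev_mem ext_R_def)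
  define N0 where "N0 = max NL NR"
  have Li0: "\<forall>v\<in>lang X. left_special X v \<and> length v \<ge> N0 \<longrightarrow>
          (\<exists>!a. left_special X (v @ [a])) \<and>
          (\<forall>a. left_special X (v @ [a]) \<longrightarrow> ext_L X (v @ [a]) = ext_L X v)"
    using NL unfolding N0_def left_special_def ext_L_def by auto
  have Ri0: "\<forall>v\<in>lang X. right_special X v \<and> length v \<ge> N0 \<longrightarrow>
          (\<exists>!a. right_special X (a # v)) \<and>
          (\<forall>a. right_special X (a # v) \<longrightarrow> ext_R X (a # v) = ext_R X v)"
  proof (intro ballI impI)
    fix v assume v: "v \<in> lang X" "right_special X v \<and> length v \<ge> N0"
    have "card {a. a # rev v \<in> rev ` lang X} \<ge> 2 \<and> length (rev v) \<ge> NR"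
      using v unfolding eR1 right_special_def N0_def by simp
    then have h: "(\<exists>!b. card {a. a # rev v @ [b] \<in> rev ` lang X} \<ge> 2) \<and>
     (\<forall>b. card {a. a # rev v @ [b] \<in> rev ` lang X} \<ge> 2 \<longrightarrow> {a. a # rev v @ [b] \<in> rev ` lang X} = {a. a # rev v \<in> rev ` lang X})"
      using NR by blast
    show "(\<exists>!a. right_special X (a # v)) \<and> (\<forall>a. right_special X (a # v) \<longrightarrow> ext_R X (a # v) = ext_R X v)"
      using h unfolding eR1 eR2 right_special_def .
  qed
  have ev: "eventually_dendric (morph_shift \<sigma> X)"
    unfolding eventually_dendric_def using main_core[OF sh rm Li0 Ri0] by blast
  have th: "dendric_threshold (morph_shift \<sigma> X) \<le> Max (range (\<lambda>a. length (\<sigma> a))) * (N + 1) + length w - 1"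
    if "(\<forall>v\<in>lang X. left_special X v \<and> length v \<ge> N \<longrightarrow>
          (\<exists>!a. left_special X (v @ [a])) \<and>
          (\<forall>a. left_special X (v @ [a]) \<longrightarrow> ext_L X (v @ [a]) = ext_L X v)) \<and>
       (\<forall>v\<in>lang X. right_special X v \<and> length v \<ge> N \<longrightarrow>
          (\<exists>!a. right_special X (a # v)) \<and>
          (\<forall>a. right_special X (a # v) \<longrightarrow> ext_R X (a # v) = ext_R X v))" for N
    unfolding dendric_threshold_def
    by (rule Least_le) (use main_core[OF sh rm] that in blast)
  show ?thesis using ev th by blast
qed

end
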